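(* Let $G$ be a nice graph that is not algebraic $(1,5)$-choosable, such that every nice graph with fewer vertices than $G$ is algebraic $(1,5)$-choosable. Then (1) $G$ has no vertex of degree $1$ adjacent to a vertex of degree $2$; and (2) $G$ has no two adjacent vertices both of degree $2$.
   Context: All graphs are finite and simple with vertex set $\{1,\dots,n\}$; an edge is a $2$-subset of the vertex set; $E(i)$ is the set of edges incident to $i$. An edge is isolated if both its ends have degree $1$; a graph is nice if it has no isolated edges. For a graph $H=(V,E)$, $P_H=\prod_{\{i,j\}\in E,\ i<j}(\sum_{e\in E(i)}x_e-\sum_{e\in E(j)}x_e)$ in variables $x_e$ (empty product $=1$); for $K:E\to\mathbb{N}$, $x^K=\prod_ex_e^{K(e)}$. $H$ is algebraic $(1,b)$-choosable if there is $K:E\to\mathbb{N}$ with $\sum_eK(e)=|E|$, $K(e)\le b-1$ for all $e$, and the coefficient of $x^K$ in $P_H$ nonzero. *)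

theory Defs
  imports Main "HOL-Library.Poly_Mapping"
begin

definition graph :: "nat \<Rightarrow> nat set set \<Rightarrow> bool" where
  "graph n E \<longleftrightarrow> (\<forall>e\<in>E. e \<subseteq> {1..n} \<and> card e = 2)"

definition inc_edges :: "nat set set \<Rightarrow> nat \<Rightarrow> nat set set" where
  "inc_edges E i = {e\<in>E. i \<in> e}"

definition deg :: "nat set set \<Rightarrow> nat \<Rightarrow> nat" where
  "deg E i = card (inc_edges E i)"

definition nice :: "nat set set \<Rightarrow> bool" where
  "nice E \<longleftrightarrow> \<not> (\<exists>i j. {i, j} \<in> E \<and> i \<noteq> j \<and> deg E i = 1 \<and> deg E j = 1)"

text \<open>Multivariate integer polynomials in variables indexed by edges:
  monomials are finitely supported exponent maps.\<close>
type_synonym mpoly = "(nat set \<Rightarrow>\<^sub>0 nat) \<Rightarrow>\<^sub>0 int"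

definition var :: "nat set \<Rightarrow> mpoly" where
  "var e = Poly_Mapping.single (Poly_Mapping.single e 1) 1"

definition P_graph :: "nat set set \<Rightarrow> mpoly" where
  "P_graph E = (\<Prod>e\<in>E. (\<Sum>f\<in>inc_edges E (Min e). var f) - (\<Sum>f\<in>inc_edges E (Max e). var f))"

definition monom_of :: "nat set set \<Rightarrow> (nat set \<Rightarrow> nat) \<Rightarrow> (nat set \<Rightarrow>\<^sub>0 nat)" where
  "monom_of E K = Abs_poly_mapping (\<lambda>e. if e \<in> E then K e else 0)"

definition alg_1b_choosable :: "nat set set \<Rightarrow> nat \<Rightarrow> bool" where
  "alg_1b_choosable E b \<longleftrightarrow>
     (\<exists>K :: nat set \<Rightarrow> nat. (\<Sum>e\<in>E. K e) = card E \<and> (\<forall>e\<in>E. K e \<le> b - 1) \<and>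
        Poly_Mapping.lookup (P_graph E) (monom_of E K) \<noteq> 0)"

end

theory Submission
  imports Defs
begin



notation Poly_Mapping.keys ("keys")
notation Poly_Mapping.lookup ("lookup")


lemma fe_mult:
  assumes h: "\<And>a b. h (a+b) = h a * h b"
  shows "frag_extend h (p*q) = frag_extend h p * frag_extend h (q :: mpoly)"
proof -
  have onex: "frag_extend h (frag_of x * q) = h x * frag_extend h q" for x
  proof -
    have "keys q \<subseteq> UNIV" by simp
    then show ?thesis
    proof (induction q rule: frag_induction)
      case zero then show ?case by simp
    next
      case (one y) then show ?case by (simp add: mult_single h)
    next
      case (diff a b) then show ?case by (simp add: right_diff_distrib frag_extend_diff)
    qed
  qed
  have "keys p \<subseteq> UNIV" by simp
  then show ?thesis
  proof (induction p rule: frag_induction)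
    case zero then show ?case by simp
  next
    case (one x) then show ?case by (simp add: onex)
  next
    case (diff a b) then show ?case by (simp add: left_diff_distrib frag_extend_diff)
  qed
qed

lemma fe_one:
  assumes "h 0 = 1"
  shows "frag_extend h 1 = 1"
proof -
  have "frag_extend h (frag_of 0) = h 0" by (rule frag_extend_of)
  then show ?thesis using assms by (metis single_one)
qed

lemma fe_prod:
  assumes h: "\<And>a b. h (a+b) = h a * h b" and "h 0 = 1" and "finite A"
  shows "frag_extend h (\<Prod>i\<in>A. f i) = (\<Prod>i\<in>A. frag_extend h (f i :: mpoly))"
  using assms(3) by (induction A rule: finite_induct) (simp_all add: fe_one[where h=h, OF assms(2)] fe_mult[OF h])

lemma keys_add_nat: "keys (a + b :: 'a \<Rightarrow>\<^sub>0 nat) = keys a \<union> keys b"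
  by (auto simp: in_keys_iff lookup_add)

definition Zs :: "nat set set \<Rightarrow> mpoly \<Rightarrow> mpoly" where
  "Zs S p = frag_extend (\<lambda>m. if keys m \<inter> S = {} then frag_of m else 0) p"

lemma Zs_h: "(\<lambda>m. if keys m \<inter> S = {} then frag_of m else (0::mpoly)) (a+b) =
   (\<lambda>m. if keys m \<inter> S = {} then frag_of m else 0) a * (\<lambda>m. if keys m \<inter> S = {} then frag_of m else 0) b"
  by (simp add: keys_add_nat mult_single Int_Un_distrib2)

lemma Zs_mult: "Zs S (p*q) = Zs S p * Zs S q"
  unfolding Zs_def by (rule fe_mult) (rule Zs_h)

lemma Zs_diff: "Zs S (p-q) = Zs S p - Zs S q"
  unfolding Zs_def by (rule frag_extend_diff)

lemma Zs_add: "Zs S (p+q) = Zs S p + Zs S q"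
  unfolding Zs_def by (rule frag_extend_add)

lemma Zs_minus: "Zs S (-p) = - Zs S p"
  unfolding Zs_def by (rule frag_extend_minus)

lemma Zs_sum: "finite A \<Longrightarrow> Zs S (\<Sum>i\<in>A. f i) = (\<Sum>i\<in>A. Zs S (f i))"
  unfolding Zs_def by (simp add: frag_extend_sum o_def)

lemma Zs_prod: "finite A \<Longrightarrow> Zs S (\<Prod>i\<in>A. f i) = (\<Prod>i\<in>A. Zs S (f i))"
  unfolding Zs_def by (rule fe_prod, rule Zs_h, simp, assumption)

lemma Zs_var: "Zs S (var f) = (if f \<in> S then 0 else var f)"
  unfolding Zs_def var_def by simp

lemma Zs_sumvar: "finite A \<Longrightarrow> Zs S (\<Sum>f\<in>A. var f) = (\<Sum>f\<in>A-S. var f)"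
  by (simp add: Zs_sum Zs_var sum.If_cases Diff_eq)

lemma lookup_Zs: "lookup (Zs S p) m = (if keys m \<inter> S = {} then lookup p m else 0)"
proof -
  have "keys p \<subseteq> UNIV" by simp
  then show ?thesis unfolding Zs_def
  proof (induction p rule: frag_induction)
    case zero then show ?case by simp
  next
    case (one x) then show ?case by auto
  next
    case (diff a b) then show ?case by (simp add: frag_extend_diff lookup_minus)
  qed
qed

lemma Zs_Zs: "Zs S (Zs T p) = Zs (S \<union> T) p"
  by (rule poly_mapping_eqI) (auto simp: lookup_Zs)

lemma Zs_free_zero: "Zs S p = p \<Longrightarrow> keys m \<inter> S \<noteq> {} \<Longrightarrow> lookup p m = 0"
  by (metis lookup_Zs)

lemma lookup_Zs_eq: "keys m \<inter> S = {} \<Longrightarrow> lookup p m = lookup (Zs S p) m"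
  by (simp add: lookup_Zs)

lemma lookup_frag_mult: "lookup (frag_of k * q) (k + m) = lookup (q::mpoly) m"
proof -
  have "keys q \<subseteq> UNIV" by simp
  then show ?thesis
  proof (induction q rule: frag_induction)
    case zero then show ?case by simp
  next
    case (one x) then show ?case by (simp add: mult_single)
  next
    case (diff a b) then show ?case by (simp add: right_diff_distrib lookup_minus)
  qed
qed

lemma lookup_var_mult: "lookup (var f * q) (Poly_Mapping.single f 1 + m) = lookup q m"
  unfolding var_def by (rule lookup_frag_mult)




definition mm :: "(nat set \<Rightarrow> nat set) \<Rightarrow> (nat set \<Rightarrow>\<^sub>0 nat) \<Rightarrow> (nat set \<Rightarrow>\<^sub>0 nat)" where
  "mm \<rho> m = Abs_poly_mapping (\<lambda>g. if g \<in> range \<rho> then lookup m (inv \<rho> g) else 0)"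

lemma lookup_mm:
  assumes "inj \<rho>"
  shows "lookup (mm \<rho> m) = (\<lambda>g. if g \<in> range \<rho> then lookup m (inv \<rho> g) else 0)"
proof -
  have "{g. (if g \<in> range \<rho> then lookup m (inv \<rho> g) else 0) \<noteq> 0} \<subseteq> \<rho> ` keys m"
  proof
    fix g assume "g \<in> {g. (if g \<in> range \<rho> then lookup m (inv \<rho> g) else 0) \<noteq> 0}"
    then have "g \<in> range \<rho>" "lookup m (inv \<rho> g) \<noteq> 0" by (auto split: if_splits)
    then show "g \<in> \<rho> ` keys m" by (metis f_inv_into_f image_eqI in_keys_iff)
  qed
  then have "finite {g. (if g \<in> range \<rho> then lookup m (inv \<rho> g) else 0) \<noteq> 0}"
    by (rule finite_subset) (simp add: finite_keys)
  then show ?thesis unfolding mm_def by (rule lookup_Abs_poly_mapping)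
qed

lemma lookup_mm_rho: "inj \<rho> \<Longrightarrow> lookup (mm \<rho> m) (\<rho> f) = lookup m f"
  by (simp add: lookup_mm)

lemma mm_add: "inj \<rho> \<Longrightarrow> mm \<rho> (a + b) = mm \<rho> a + mm \<rho> b"
  by (rule poly_mapping_eqI) (simp add: lookup_mm lookup_add)

lemma mm_zero: "inj \<rho> \<Longrightarrow> mm \<rho> 0 = 0"
  by (rule poly_mapping_eqI) (simp add: lookup_mm)

lemma mm_single: "inj \<rho> \<Longrightarrow> mm \<rho> (Poly_Mapping.single f 1) = Poly_Mapping.single (\<rho> f) 1"
  by (rule poly_mapping_eqI) (simp add: lookup_mm lookup_single when_def, metis f_inv_into_f inv_f_f rangeI)

lemma mm_inj: "inj \<rho> \<Longrightarrow> mm \<rho> a = mm \<rho> b \<Longrightarrow> a = b"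
  by (metis lookup_mm_rho poly_mapping_eqI)

definition Rn :: "(nat set \<Rightarrow> nat set) \<Rightarrow> mpoly \<Rightarrow> mpoly" where
  "Rn \<rho> p = frag_extend (\<lambda>m. frag_of (mm \<rho> m)) p"

lemma Rn_h: "inj \<rho> \<Longrightarrow> (\<lambda>m. frag_of (mm \<rho> m)) (a+b) = (\<lambda>m. frag_of (mm \<rho> m)) a * (\<lambda>m. frag_of (mm \<rho> m)) b"
  by (simp add: mm_add mult_single)

lemma Rn_prod: "inj \<rho> \<Longrightarrow> finite A \<Longrightarrow> Rn \<rho> (\<Prod>i\<in>A. f i) = (\<Prod>i\<in>A. Rn \<rho> (f i))"
  unfolding Rn_def by (rule fe_prod, rule Rn_h, simp, simp add: mm_zero, assumption)

lemma Rn_diff: "Rn \<rho> (p-q) = Rn \<rho> p - Rn \<rho> q"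
  unfolding Rn_def by (rule frag_extend_diff)

lemma Rn_sum: "finite A \<Longrightarrow> Rn \<rho> (\<Sum>i\<in>A. f i) = (\<Sum>i\<in>A. Rn \<rho> (f i))"
  unfolding Rn_def by (simp add: frag_extend_sum o_def)

lemma Rn_var: "inj \<rho> \<Longrightarrow> Rn \<rho> (var f) = var (\<rho> f)"
  unfolding Rn_def var_def using mm_single[of \<rho> f] by simp

lemma lookup_Rn: 
  assumes "inj \<rho>" shows "lookup (Rn \<rho> p) (mm \<rho> m) = lookup p m"
proof -
  have "keys p \<subseteq> UNIV" by simp
  then show ?thesis unfolding Rn_def
  proof (induction p rule: frag_induction)
    case zero then show ?case by simp
  next
    case (one x) then show ?case using mm_inj[OF assms, of m x] by auto
  next
    case (diff a b) then show ?case by (simp add: frag_extend_diff lookup_minus)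
  qed
qed




definition Lf :: "nat set set \<Rightarrow> nat set \<Rightarrow> mpoly" where
  "Lf E e = (\<Sum>f\<in>inc_edges E (Min e). var f) - (\<Sum>f\<in>inc_edges E (Max e). var f)"

lemma P_Lf: "P_graph E = (\<Prod>e\<in>E. Lf E e)"
  by (simp add: P_graph_def Lf_def)

lemma finite_graph: "graph n E \<Longrightarrow> finite E"
proof -
  assume "graph n E"
  then have "E \<subseteq> Pow {1..n}" unfolding graph_def by auto
  then show ?thesis by (rule finite_subset) simp
qed

lemma finite_inc: "finite E \<Longrightarrow> finite (inc_edges E i)"
  unfolding inc_edges_def by simp

lemma lookup_monom: "finite E \<Longrightarrow> lookup (monom_of E K) = (\<lambda>e. if e \<in> E then K e else 0)"
  unfolding monom_of_def
  by (rule lookup_Abs_poly_mapping) (rule finite_subset[of _ E], auto)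

lemma keys_monom: "finite E \<Longrightarrow> keys (monom_of E K) \<subseteq> E"
  by (auto simp: in_keys_iff lookup_monom split: if_splits)

lemma sigma_exists:
  "finite W \<Longrightarrow> 0 \<notin> W \<Longrightarrow> \<exists>\<sigma>::nat\<Rightarrow>nat. strict_mono \<sigma> \<and> \<sigma> 0 = 0 \<and> \<sigma> ` {1..card W} = W"
proof (induction W rule: finite_linorder_max_induct)
  case empty
  show ?case by (rule exI[of _ id]) (simp add: strict_mono_def)
next
  case (insert b A)
  then obtain \<sigma> where s: "strict_mono \<sigma>" "\<sigma> 0 = 0" "\<sigma> ` {1..card A} = A" by auto
  define k where "k = card A"
  define \<tau> where "\<tau> = (\<lambda>i. if i \<le> k then \<sigma> i else b + (i - Suc k))"
  have bA: "b \<notin> A" using insert by auto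
  have b0: "b > 0" using insert by auto
  have lt: "\<sigma> i < b" if "i \<le> k" for i
  proof (cases "i = 0")
    case True then show ?thesis using s b0 by simp
  next
    case False then have "\<sigma> i \<in> A" using s that k_def by auto
    then show ?thesis using insert by auto
  qed
  have "strict_mono \<tau>"
  proof (rule strict_monoI)
    fix i j :: nat assume "i < j"
    then show "\<tau> i < \<tau> j"
      using lt s(1) unfolding \<tau>_def by (auto simp: strict_mono_def dest: lt)
  qed
  moreover have "\<tau> 0 = 0" using s unfolding \<tau>_def by simp
  moreover have "\<tau> ` {1..card (insert b A)} = insert b A"
  proof -
    have c: "card (insert b A) = Suc k" using bA insert k_def by simp
    have "{1..Suc k} = insert (Suc k) {1..k}" by auto
    then have "\<tau> ` {1..Suc k} = insert (\<tau> (Suc k)) (\<tau> ` {1..k})" by (metis image_insert)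
    moreover have "\<tau> (Suc k) = b" unfolding \<tau>_def by simp
    ultimately have "\<tau> ` {1..Suc k} = insert b (\<tau> ` {1..k})" by simp
    also have "\<tau> ` {1..k} = \<sigma> ` {1..k}" unfolding \<tau>_def by (rule image_cong) auto
    finally show ?thesis using c s k_def by simp
  qed
  ultimately show ?case by blast
qed


lemma relabel:
  fixes \<sigma> :: "nat \<Rightarrow> nat"
  assumes sm: "strict_mono \<sigma>" and fin: "finite E'"
    and sub: "\<forall>e\<in>E'. e \<subseteq> \<sigma> ` {1..k} \<and> card e = 2" and nc: "nice E'"
  shows "\<exists>E''. graph k E'' \<and> nice E'' \<and> (alg_1b_choosable E'' 5 \<longrightarrow> alg_1b_choosable E' 5)"
proof -
  define \<rho> where "\<rho> = (\<lambda>d. \<sigma> ` d)"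
  have injs: "inj \<sigma>" using sm by (rule strict_mono_imp_inj_on)
  have injr: "inj \<rho>" unfolding \<rho>_def by (rule injI) (simp add: inj_image_eq_iff[OF injs])
  have rinv: "inv \<rho> (\<rho> d) = d" for d by (rule inv_f_f[OF injr])
  have mem: "\<sigma> i \<in> \<rho> d \<longleftrightarrow> i \<in> d" for i d
    unfolding \<rho>_def by (rule inj_image_mem_iff[OF injs])
  define E'' where "E'' = {d. d \<subseteq> {1..k} \<and> \<rho> d \<in> E'}"
  have img: "\<rho> ` E'' = E'"
  proof
    show "\<rho> ` E'' \<subseteq> E'" unfolding E''_def by auto
  next
    show "E' \<subseteq> \<rho> ` E''"
    proof
      fix e assume e: "e \<in> E'"
      define d where "d = {i\<in>{1..k}. \<sigma> i \<in> e}"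
      have es: "e \<subseteq> \<sigma> ` {1..k}" using sub e by blast
      have "\<rho> d = e" unfolding d_def \<rho>_def using es by auto
      moreover have "d \<in> E''" unfolding E''_def using calculation e d_def by auto
      ultimately show "e \<in> \<rho> ` E''" by blast
    qed
  qed
  have finE: "finite E''" unfolding E''_def by (rule finite_subset[of _ "Pow {1..k}"]) auto
  have inc: "inc_edges E' (\<sigma> i) = \<rho> ` inc_edges E'' i" for i
    unfolding inc_edges_def using img mem by auto
  have degeq: "deg E'' i = deg E' (\<sigma> i)" for i
    unfolding deg_def inc using card_image[of \<rho>] injr by (simp add: inj_on_def inj_def)
  have cardr: "card (\<rho> d) = card d" for d
    unfolding \<rho>_def using injs by (simp add: card_image inj_on_def inj_def)
  have gr: "graph k E''" unfolding graph_def
  proof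
    fix d assume "d \<in> E''"
    then have a: "d \<subseteq> {1..k}" "\<rho> d \<in> E'" unfolding E''_def by auto
    then have "card (\<rho> d) = 2" using sub by blast
    then show "d \<subseteq> {1..k} \<and> card d = 2" using a cardr by simp
  qed
  have ni: "nice E''" unfolding nice_def
  proof
    assume "\<exists>i j. {i, j} \<in> E'' \<and> i \<noteq> j \<and> deg E'' i = 1 \<and> deg E'' j = 1"
    then obtain i j where ij: "{i, j} \<in> E''" "i \<noteq> j" "deg E'' i = 1" "deg E'' j = 1" by blast
    have "\<rho> {i, j} \<in> E'" using ij(1) unfolding E''_def by blast
    then have "{\<sigma> i, \<sigma> j} \<in> E'" unfolding \<rho>_def by simp
    moreover have "\<sigma> i \<noteq> \<sigma> j" using ij(2) injs by (simp add: inj_eq)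
    moreover have "deg E' (\<sigma> i) = 1" "deg E' (\<sigma> j) = 1" using ij degeq by auto
    ultimately have "\<exists>i j. {i, j} \<in> E' \<and> i \<noteq> j \<and> deg E' i = 1 \<and> deg E' j = 1" by blast
    then show False using nc unfolding nice_def by blast
  qed
  have ch: "alg_1b_choosable E' 5" if ch0: "alg_1b_choosable E'' 5"
  proof -
    obtain K'' where K: "(\<Sum>e\<in>E''. K'' e) = card E''" "\<forall>e\<in>E''. K'' e \<le> 5 - 1"
      "lookup (P_graph E'') (monom_of E'' K'') \<noteq> 0"
      using ch0 unfolding alg_1b_choosable_def by blast
    define K' where "K' = (\<lambda>e. K'' (inv \<rho> e))"
    have injon: "inj_on \<rho> A" for A using injr by (simp add: inj_on_def inj_def)
    have s1: "(\<Sum>e\<in>E'. K' e) = card E'"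
    proof -
      have "(\<Sum>e\<in>E'. K' e) = (\<Sum>e\<in>\<rho> ` E''. K' e)" using img by simp
      also have "\<dots> = (\<Sum>d\<in>E''. K' (\<rho> d))" by (rule sum.reindex[OF injon, unfolded o_def])
      also have "\<dots> = card E''" unfolding K'_def rinv using K(1) by simp
      also have "\<dots> = card E'" using img card_image[OF injon] by metis
      finally show ?thesis .
    qed
    have s2: "\<forall>e\<in>E'. K' e \<le> 5 - 1"
    proof
      fix e assume "e \<in> E'"
      then obtain d where "d \<in> E''" "e = \<rho> d" using img by blast
      then show "K' e \<le> 5 - 1" using K(2) unfolding K'_def by (simp add: rinv)
    qed
    have mono: "monom_of E' K' = mm \<rho> (monom_of E'' K'')"
    proof (rule poly_mapping_eqI)
      fix g
      show "lookup (monom_of E' K') g = lookup (mm \<rho> (monom_of E'' K'')) g"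
      proof (cases "g \<in> range \<rho>")
        case True
        then obtain d where d: "g = \<rho> d" by blast
        have "d \<in> E'' \<longleftrightarrow> \<rho> d \<in> E'" using img injr by (auto simp: inj_def)
        then show ?thesis using d fin finE by (simp add: lookup_mm[OF injr] lookup_monom K'_def rinv)
      next
        case False
        then have "g \<notin> E'" using img by auto
        then show ?thesis using False fin by (simp add: lookup_mm[OF injr] lookup_monom)
      qed
    qed
    have Lrn: "Rn \<rho> (Lf E'' d) = Lf E' (\<rho> d)" if "d \<in> E''" for d
    proof -
      have c2: "card d = 2" using that gr unfolding graph_def by blast
      have dne: "finite d" "d \<noteq> {}" using c2 by (auto intro: card_ge_0_finite)
      have mn: "Min (\<rho> d) = \<sigma> (Min d)" "Max (\<rho> d) = \<sigma> (Max d)"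
        unfolding \<rho>_def using mono_Min_commute[OF strict_mono_mono[OF sm] dne]
          mono_Max_commute[OF strict_mono_mono[OF sm] dne] by simp_all
      have sv: "Rn \<rho> (\<Sum>f\<in>inc_edges E'' i. var f) = (\<Sum>g\<in>inc_edges E' (\<sigma> i). var g)" for i
      proof -
        have "Rn \<rho> (\<Sum>f\<in>inc_edges E'' i. var f) = (\<Sum>f\<in>inc_edges E'' i. var (\<rho> f))"
          using finite_inc[OF finE] by (simp add: Rn_sum Rn_var[OF injr])
        also have "\<dots> = (\<Sum>g\<in>\<rho> ` inc_edges E'' i. var g)"
          by (rule sum.reindex[OF injon, unfolded o_def, symmetric])
        finally show ?thesis using inc by simp
      qed
      show ?thesis unfolding Lf_def Rn_diff sv mn ..
    qed
    have PP: "P_graph E' = Rn \<rho> (P_graph E'')"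
    proof -
      have "Rn \<rho> (P_graph E'') = (\<Prod>d\<in>E''. Rn \<rho> (Lf E'' d))"
        unfolding P_Lf using Rn_prod[OF injr finE] .
      also have "\<dots> = (\<Prod>d\<in>E''. Lf E' (\<rho> d))" using Lrn by simp
      also have "\<dots> = (\<Prod>e\<in>\<rho> ` E''. Lf E' e)"
        by (rule prod.reindex[OF injon, unfolded o_def, symmetric])
      finally show ?thesis using img P_Lf by simp
    qed
    have "lookup (P_graph E') (monom_of E' K') = lookup (P_graph E'') (monom_of E'' K'')"
      unfolding PP mono by (rule lookup_Rn[OF injr])
    then have "lookup (P_graph E') (monom_of E' K') \<noteq> 0" using K(3) by simp
    then show ?thesis unfolding alg_1b_choosable_def using s1 s2 by blast
  qed
  show ?thesis using gr ni ch by blast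
qed




lemma sub_choosable:
  assumes gr: "graph n E"
    and minh: "\<And>m E'. m < n \<Longrightarrow> graph m E' \<Longrightarrow> nice E' \<Longrightarrow> alg_1b_choosable E' 5"
    and R: "R \<subseteq> {1..n}" "R \<noteq> {}" and E'def: "E' = {e\<in>E. e \<inter> R = {}}" and nc: "nice E'"
  shows "alg_1b_choosable E' 5"
proof -
  define W where "W = {1..n} - R"
  have fW: "finite W" "0 \<notin> W" unfolding W_def by auto
  obtain \<sigma> :: "nat \<Rightarrow> nat" where s: "strict_mono \<sigma>" "\<sigma> ` {1..card W} = W"
    using sigma_exists[OF fW] by blast
  have "card W = n - card R" unfolding W_def using R by (simp add: card_Diff_subset finite_subset)
  moreover have "card R > 0" using R by (metis card_gt_0_iff finite_atLeastAtMost finite_subset)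
  moreover have "card R \<le> n" using R card_mono[of "{1..n}" R] by simp
  ultimately have kn: "card W < n" by linarith
  have fE: "finite E'" using finite_graph[OF gr] E'def by simp
  have sub: "\<forall>e\<in>E'. e \<subseteq> \<sigma> ` {1..card W} \<and> card e = 2"
    using gr E'def s(2) unfolding graph_def W_def by auto
  obtain E'' where E'': "graph (card W) E''" "nice E''" "alg_1b_choosable E'' 5 \<longrightarrow> alg_1b_choosable E' 5"
    using relabel[OF s(1) fE sub nc] by blast
  show ?thesis using E'' minh[OF kn] by blast
qed

lemma extend:
  assumes fin: "finite E" and sub: "E' \<subseteq> E" and ch: "alg_1b_choosable E' 5"
    and keysD: "keys mD \<subseteq> E - E'" and sumD: "(\<Sum>e\<in>E-E'. lookup mD e) = card (E - E')"
    and bnd: "\<forall>e. lookup mD e \<le> 4"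
    and coef: "\<And>m'. keys m' \<subseteq> E' \<Longrightarrow> lookup (P_graph E) (mD + m') = lookup (P_graph E') m'
                 \<or> lookup (P_graph E) (mD + m') = - lookup (P_graph E') m'"
  shows "alg_1b_choosable E 5"
proof -
  obtain K' where K: "(\<Sum>e\<in>E'. K' e) = card E'" "\<forall>e\<in>E'. K' e \<le> 5 - 1"
      "lookup (P_graph E') (monom_of E' K') \<noteq> 0"
    using ch unfolding alg_1b_choosable_def by blast
  define K where "K = (\<lambda>e. if e \<in> E' then K' e else lookup mD e)"
  have fE': "finite E'" using fin sub finite_subset by blast
  have mon: "monom_of E K = mD + monom_of E' K'"
  proof (rule poly_mapping_eqI)
    fix g
    have "g \<notin> E - E' \<Longrightarrow> lookup mD g = 0" using keysD by (auto simp: in_keys_iff)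
    then show "lookup (monom_of E K) g = lookup (mD + monom_of E' K') g"
      using sub by (auto simp: lookup_monom fin fE' lookup_add K_def)
  qed
  have "(\<Sum>e\<in>E. K e) = (\<Sum>e\<in>E'. K e) + (\<Sum>e\<in>E-E'. K e)"
    using sum.subset_diff[OF sub fin] by (simp add: add.commute)
  also have "\<dots> = card E' + card (E - E')" using K(1) sumD unfolding K_def by simp
  also have "\<dots> = card E" using card_Diff_subset[OF fE' sub] card_mono[OF fin sub] by simp
  finally have s1: "(\<Sum>e\<in>E. K e) = card E" .
  have s2: "\<forall>e\<in>E. K e \<le> 5 - 1" using K(2) bnd unfolding K_def by simp
  have "keys (monom_of E' K') \<subseteq> E'" by (rule keys_monom[OF fE'])
  then have "lookup (P_graph E) (monom_of E K) \<noteq> 0" using coef K(3) unfolding mon by force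
  then show ?thesis unfolding alg_1b_choosable_def using s1 s2 by blast
qed

lemma Lf_pair:
  assumes "p \<noteq> q"
  shows "Lf E {p,q} = (\<Sum>f\<in>inc_edges E p. var f) - (\<Sum>f\<in>inc_edges E q. var f)
       \<or> Lf E {p,q} = - ((\<Sum>f\<in>inc_edges E p. var f) - (\<Sum>f\<in>inc_edges E q. var f))"
proof (cases "p < q")
  case True then show ?thesis unfolding Lf_def by (simp add: min_def max_def)
next
  case False then have "q < p" using assms by simp
  then show ?thesis unfolding Lf_def by (simp add: min_def max_def)
qed

lemma pm_mult: "(a = x \<or> a = - x) \<Longrightarrow> (b = y \<or> b = - y) \<Longrightarrow> (a * b = x * y \<or> a * b = - (x * (y::mpoly)))"
  by auto

lemma pm_eq: "(a = x \<or> a = - x) \<Longrightarrow> x = y \<Longrightarrow> (a = y \<or> a = - (y::mpoly))"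
  by auto

lemma Zprod:
  assumes fin: "finite E"
    and H: "\<forall>e\<in>E'. inc_edges E (Min e) - S = inc_edges E' (Min e) \<and> inc_edges E (Max e) - S = inc_edges E' (Max e)"
    and fE': "finite E'"
  shows "Zs S (\<Prod>e\<in>E'. Lf E e) = P_graph E'"
proof -
  have "Zs S (\<Prod>e\<in>E'. Lf E e) = (\<Prod>e\<in>E'. Zs S (Lf E e))" by (rule Zs_prod[OF fE'])
  also have "\<dots> = (\<Prod>e\<in>E'. Lf E' e)"
  proof (rule prod.cong[OF refl])
    fix e assume "e \<in> E'"
    then show "Zs S (Lf E e) = Lf E' e" using H unfolding Lf_def
      by (simp add: Zs_diff Zs_sumvar finite_inc[OF fin])
  qed
  finally show ?thesis by (simp add: P_Lf)
qed

lemma Zfree: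
  assumes "finite F" "S \<inter> F = {}"
  shows "Zs S (P_graph F) = P_graph F"
proof -
  have inc: "inc_edges F t - S = inc_edges F t" for t using assms(2) unfolding inc_edges_def by auto
  have "Zs S (P_graph F) = (\<Prod>e\<in>F. Zs S (Lf F e))" unfolding P_Lf by (rule Zs_prod[OF assms(1)])
  also have "\<dots> = P_graph F" unfolding P_Lf Lf_def
    by (simp add: Zs_diff Zs_sumvar finite_inc[OF assms(1)] inc)
  finally show ?thesis .
qed

lemma keys_single_add: "keys (Poly_Mapping.single f (1::nat) + m) = insert f (keys m)"
  by (simp add: keys_add_nat)

lemma inc_split: "finite E \<Longrightarrow> e \<in> inc_edges E t \<Longrightarrow>
   (\<Sum>f\<in>inc_edges E t. var f) = var e + (\<Sum>f\<in>inc_edges E t - {e}. var f)"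
  by (simp add: finite_inc sum.remove)




abbreviation sg :: "nat set \<Rightarrow> (nat set \<Rightarrow>\<^sub>0 nat)" where "sg f \<equiv> Poly_Mapping.single f 1"

lemma min_in: "card e = 2 \<Longrightarrow> Min e \<in> e \<and> Max e \<in> e"
proof -
  assume "card e = 2"
  then have "finite e" "e \<noteq> {}" by (auto intro: card_ge_0_finite)
  then show ?thesis by simp
qed

lemma H_from:
  assumes gr: "\<forall>e\<in>E. card e = 2" and E'sub: "E' \<subseteq> E"
    and ht: "\<And>e t. e \<in> E' \<Longrightarrow> t \<in> e \<Longrightarrow> inc_edges E t - S = inc_edges E' t"
  shows "\<forall>e\<in>E'. inc_edges E (Min e) - S = inc_edges E' (Min e) \<and> inc_edges E (Max e) - S = inc_edges E' (Max e)"
  using min_in gr E'sub ht by blast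

lemma conf1:
  assumes fin: "finite E" and gr: "\<forall>e\<in>E. card e = 2"
    and d: "u \<noteq> v" "v \<noteq> w" "u \<noteq> w"
    and e1: "{u,v} \<in> E" and e2: "{v,w} \<in> E"
    and iu: "inc_edges E u = {{u,v}}" and iv: "inc_edges E v = {{u,v},{v,w}}"
    and km: "keys m' \<subseteq> E - {{u,v},{v,w}}"
  shows "lookup (P_graph E) (sg {v,w} + (sg {u,v} + m')) = lookup (P_graph (E - {{u,v},{v,w}})) m'
       \<or> lookup (P_graph E) (sg {v,w} + (sg {u,v} + m')) = - lookup (P_graph (E - {{u,v},{v,w}})) m'"
proof -
  define e1 e2 where "e1 = {u,v}" and "e2 = {v,w}"
  define E' where "E' = E - {e1, e2}"
  define Sw where "Sw = (\<Sum>f\<in>inc_edges E w - {e2}. var f)"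
  define B where "B = (\<Prod>e\<in>E'. Lf E e)"
  have ne: "e1 \<noteq> e2" unfolding e1_def e2_def using d by (auto simp: doubleton_eq_iff)
  have fE': "finite E'" unfolding E'_def using fin by simp
  have PE: "P_graph E = Lf E e1 * (Lf E e2 * B)"
  proof -
    have "E = insert e1 (insert e2 E')" unfolding E'_def using e1 e2 e1_def e2_def by auto
    moreover have "e1 \<notin> insert e2 E'" "e2 \<notin> E'" unfolding E'_def using ne by auto
    ultimately show ?thesis unfolding P_Lf B_def using fE' by simp
  qed
  have e2w: "e2 \<in> inc_edges E w" unfolding inc_edges_def e2_def using e2 by simp
  have e1w: "e1 \<notin> inc_edges E w" unfolding inc_edges_def e1_def using d by auto
  have L1: "Lf E e1 = var e2 \<or> Lf E e1 = - var e2"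
    using Lf_pair[OF d(1), of E] unfolding e1_def e2_def iu iv using ne[unfolded e1_def e2_def]
    by (auto simp: algebra_simps)
  have L2: "Lf E e2 = var e1 - Sw \<or> Lf E e2 = - (var e1 - Sw)"
  proof -
    have "(\<Sum>f\<in>inc_edges E v. var f) - (\<Sum>f\<in>inc_edges E w. var f) = var e1 - Sw"
      unfolding inc_split[OF fin e2w] Sw_def using ne unfolding iv e1_def e2_def by simp
    then show ?thesis using Lf_pair[OF d(2), of E] unfolding e2_def by simp
  qed
  have PE2: "P_graph E = var e2 * ((var e1 - Sw) * B) \<or> P_graph E = - (var e2 * ((var e1 - Sw) * B))"
    unfolding PE by (rule pm_mult[OF L1 pm_mult[OF L2 disjI1[OF refl]]])
  have uv_notin: "u \<notin> e \<and> v \<notin> e" if "e \<in> E'" for e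
  proof -
    have "e \<notin> inc_edges E u" "e \<notin> inc_edges E v" using that iu iv unfolding E'_def e1_def e2_def by auto
    then show ?thesis using that unfolding E'_def inc_edges_def by auto
  qed
  have H: "\<forall>e\<in>E'. inc_edges E (Min e) - {e2} = inc_edges E' (Min e) \<and> inc_edges E (Max e) - {e2} = inc_edges E' (Max e)"
  proof (rule H_from[OF gr])
    show "E' \<subseteq> E" unfolding E'_def by auto
  next
    fix e t assume "e \<in> E'" "t \<in> e"
    then have "t \<noteq> u" "t \<noteq> v" using uv_notin by auto
    then show "inc_edges E t - {e2} = inc_edges E' t" unfolding inc_edges_def E'_def e1_def by auto
  qed
  define m2 where "m2 = sg e1 + m'"
  have k2: "keys m2 \<inter> {e2} = {}" unfolding m2_def keys_single_add using ne km unfolding E'_def e1_def e2_def by auto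
  have k1: "keys m2 \<inter> {e1} \<noteq> {}" unfolding m2_def keys_single_add by auto
  have Z2: "Zs {e2} ((var e1 - Sw) * B) = (var e1 - Sw) * P_graph E'"
    unfolding Zs_mult Zs_diff Zs_var Sw_def using ne
    by (simp add: Zs_sumvar finite_inc[OF fin] Zprod[OF fin H fE', folded B_def])
  have F1: "Zs {e1} (Sw * P_graph E') = Sw * P_graph E'"
  proof -
    have "e1 \<notin> E'" unfolding E'_def by simp
    then have "Zs {e1} (P_graph E') = P_graph E'" using Zfree[OF fE'] by simp
    moreover have "Zs {e1} Sw = Sw" unfolding Sw_def using e1w
      by (simp add: Zs_sumvar finite_inc[OF fin])
    ultimately show ?thesis by (simp add: Zs_mult)
  qed
  have V: "lookup (var e2 * ((var e1 - Sw) * B)) (sg e2 + m2) = lookup (P_graph E') m'"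
  proof -
    have "lookup (var e2 * ((var e1 - Sw) * B)) (sg e2 + m2) = lookup ((var e1 - Sw) * B) m2"
      by (rule lookup_var_mult)
    also have "\<dots> = lookup ((var e1 - Sw) * P_graph E') m2"
      using lookup_Zs_eq[OF k2, of "(var e1 - Sw) * B"] Z2 by simp
    also have "\<dots> = lookup (var e1 * P_graph E') m2 - lookup (Sw * P_graph E') m2"
      by (simp add: left_diff_distrib lookup_minus)
    also have "lookup (Sw * P_graph E') m2 = 0" by (rule Zs_free_zero[OF F1 k1])
    also have "lookup (var e1 * P_graph E') m2 = lookup (P_graph E') m'"
      unfolding m2_def by (rule lookup_var_mult)
    finally show ?thesis by simp
  qed
  show ?thesis using PE2 V unfolding m2_def E'_def e1_def e2_def by (auto simp: lookup_minus)
qed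


lemma Zs_empty: "Zs {} p = p"
  by (rule poly_mapping_eqI) (simp add: lookup_Zs)

lemma confP4:
  assumes fin: "finite E" and gr: "\<forall>e\<in>E. card e = 2"
    and d: "u \<noteq> v" "v \<noteq> w" "u \<noteq> w" "z \<noteq> u" "z \<noteq> v" "z \<noteq> w"
    and e1: "{u,v} \<in> E" and e2: "{v,w} \<in> E" and e3: "{w,z} \<in> E"
    and iu: "inc_edges E u = {{u,v}}" and iv: "inc_edges E v = {{u,v},{v,w}}"
    and iw: "inc_edges E w = {{v,w},{w,z}}" and iz: "inc_edges E z = {{w,z}}"
    and km: "keys m' \<subseteq> E - {{u,v},{v,w},{w,z}}"
  shows "lookup (P_graph E) (sg {v,w} + (sg {v,w} + (sg {u,v} + m'))) = lookup (P_graph (E - {{u,v},{v,w},{w,z}})) m'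
       \<or> lookup (P_graph E) (sg {v,w} + (sg {v,w} + (sg {u,v} + m'))) = - lookup (P_graph (E - {{u,v},{v,w},{w,z}})) m'"
proof -
  define e1 e2 e3 where "e1 = {u,v}" and "e2 = {v,w}" and "e3 = {w,z}"
  define E' where "E' = E - {e1, e2, e3}"
  define B where "B = (\<Prod>e\<in>E'. Lf E e)"
  have ne: "e1 \<noteq> e2" "e1 \<noteq> e3" "e2 \<noteq> e3" unfolding e1_def e2_def e3_def using d by (auto simp: doubleton_eq_iff)
  have fE': "finite E'" unfolding E'_def using fin by simp
  have PE: "P_graph E = Lf E e1 * (Lf E e2 * (Lf E e3 * B))"
  proof -
    have "E = insert e1 (insert e2 (insert e3 E'))" unfolding E'_def using e1 e2 e3 e1_def e2_def e3_def by auto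
    moreover have "e1 \<notin> insert e2 (insert e3 E')" "e2 \<notin> insert e3 E'" "e3 \<notin> E'" unfolding E'_def using ne by auto
    ultimately show ?thesis unfolding P_Lf B_def using fE' by simp
  qed
  have L1: "Lf E e1 = var e2 \<or> Lf E e1 = - var e2"
    using Lf_pair[OF d(1), of E] unfolding e1_def e2_def iu iv using ne[unfolded e1_def e2_def e3_def]
    by (auto simp: algebra_simps)
  have L2: "Lf E e2 = var e1 - var e3 \<or> Lf E e2 = - (var e1 - var e3)"
    using Lf_pair[OF d(2), of E] unfolding e1_def e2_def e3_def iv iw using ne[unfolded e1_def e2_def e3_def]
    by (auto simp: algebra_simps)
  have L3: "Lf E e3 = var e2 \<or> Lf E e3 = - var e2"
    using Lf_pair[of w z E] d unfolding e1_def e2_def e3_def iw iz using ne[unfolded e1_def e2_def e3_def]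
    by (auto simp: algebra_simps)
  have PE2: "P_graph E = var e2 * ((var e1 - var e3) * (var e2 * B)) \<or> P_graph E = - (var e2 * ((var e1 - var e3) * (var e2 * B)))"
    unfolding PE by (rule pm_mult[OF L1 pm_mult[OF L2 pm_mult[OF L3 disjI1[OF refl]]]])
  have notin: "u \<notin> e \<and> v \<notin> e \<and> w \<notin> e \<and> z \<notin> e" if "e \<in> E'" for e
  proof -
    have "e \<notin> inc_edges E u" "e \<notin> inc_edges E v" "e \<notin> inc_edges E w" "e \<notin> inc_edges E z"
      using that iu iv iw iz unfolding E'_def e1_def e2_def e3_def by auto
    then show ?thesis using that unfolding E'_def inc_edges_def by auto
  qed
  have H: "\<forall>e\<in>E'. inc_edges E (Min e) - {} = inc_edges E' (Min e) \<and> inc_edges E (Max e) - {} = inc_edges E' (Max e)"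
  proof (rule H_from[OF gr])
    show "E' \<subseteq> E" unfolding E'_def by auto
  next
    fix e t assume "e \<in> E'" "t \<in> e"
    then have "t \<noteq> u" "t \<noteq> v" "t \<noteq> w" "t \<noteq> z" using notin by auto
    then show "inc_edges E t - {} = inc_edges E' t" unfolding inc_edges_def E'_def e1_def e2_def e3_def by auto
  qed
  have BP: "B = P_graph E'" using Zprod[OF fin H fE'] unfolding B_def Zs_empty .
  define m1 where "m1 = sg e1 + m'"
  have k1: "keys m1 \<inter> {e1} \<noteq> {}" unfolding m1_def keys_single_add by auto
  have F1: "Zs {e1} (var e3 * P_graph E') = var e3 * P_graph E'"
  proof -
    have "e1 \<notin> E'" unfolding E'_def by simp
    then have "Zs {e1} (P_graph E') = P_graph E'" using Zfree[OF fE'] by simp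
    then show ?thesis using ne by (simp add: Zs_mult Zs_var)
  qed
  have V: "lookup (var e2 * ((var e1 - var e3) * (var e2 * B))) (sg e2 + (sg e2 + m1)) = lookup (P_graph E') m'"
  proof -
    have eq: "var e2 * ((var e1 - var e3) * (var e2 * B)) = var e2 * (var e2 * ((var e1 - var e3) * B))"
      by (simp add: algebra_simps)
    have "lookup (var e2 * ((var e1 - var e3) * (var e2 * B))) (sg e2 + (sg e2 + m1))
        = lookup ((var e1 - var e3) * B) m1" unfolding eq lookup_var_mult by (rule refl)
    also have "\<dots> = lookup (var e1 * P_graph E') m1 - lookup (var e3 * P_graph E') m1"
      unfolding BP by (simp add: left_diff_distrib lookup_minus)
    also have "lookup (var e3 * P_graph E') m1 = 0" by (rule Zs_free_zero[OF F1 k1])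
    also have "lookup (var e1 * P_graph E') m1 = lookup (P_graph E') m'"
      unfolding m1_def by (rule lookup_var_mult)
    finally show ?thesis by simp
  qed
  show ?thesis using PE2 V unfolding m1_def E'_def e1_def e2_def e3_def by (auto simp: lookup_minus)
qed




lemma Lf_pair':
  assumes "p \<noteq> q" "(\<Sum>f\<in>inc_edges E p. var f) - (\<Sum>f\<in>inc_edges E q. var f) = X"
  shows "Lf E {p,q} = X \<or> Lf E {p,q} = - X"
  using Lf_pair[OF assms(1), of E] assms(2) by simp


lemma conf2:
  assumes fin: "finite E" and gr: "\<forall>e\<in>E. card e = 2"
    and d: "u \<noteq> v" "a \<noteq> u" "a \<noteq> v" "b \<noteq> u" "b \<noteq> v"
    and e0: "{u,a} \<in> E" and e1: "{u,v} \<in> E" and e2: "{v,b} \<in> E"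
    and iu: "inc_edges E u = {{u,a},{u,v}}" and iv: "inc_edges E v = {{u,v},{v,b}}"
    and km: "keys m' \<subseteq> E - {{u,a},{u,v},{v,b}}"
  shows "lookup (P_graph E) (sg {u,a} + (sg {u,v} + (sg {u,v} + m'))) = lookup (P_graph (E - {{u,a},{u,v},{v,b}})) m'
       \<or> lookup (P_graph E) (sg {u,a} + (sg {u,v} + (sg {u,v} + m'))) = - lookup (P_graph (E - {{u,a},{u,v},{v,b}})) m'"
proof -
  define e0 e1 e2 where "e0 = {u,a}" and "e1 = {u,v}" and "e2 = {v,b}"
  define E' where "E' = E - {e0, e1, e2}"
  define B where "B = (\<Prod>e\<in>E'. Lf E e)"
  define Sa where "Sa = (\<Sum>f\<in>inc_edges E a - {e0}. var f)"
  define Sb where "Sb = (\<Sum>f\<in>inc_edges E b - {e2}. var f)"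
  have ne: "e0 \<noteq> e1" "e1 \<noteq> e2" "e0 \<noteq> e2" unfolding e0_def e1_def e2_def using d by (auto simp: doubleton_eq_iff)
  have fE': "finite E'" unfolding E'_def using fin by simp
  have PE: "P_graph E = Lf E e0 * (Lf E e1 * (Lf E e2 * B))"
  proof -
    have "E = insert e0 (insert e1 (insert e2 E'))" unfolding E'_def using e0 e1 e2 e0_def e1_def e2_def by auto
    moreover have "e0 \<notin> insert e1 (insert e2 E')" "e1 \<notin> insert e2 E'" "e2 \<notin> E'" unfolding E'_def using ne by auto
    ultimately show ?thesis unfolding P_Lf B_def using fE' by simp
  qed
  have e0a: "e0 \<in> inc_edges E a" unfolding inc_edges_def e0_def using e0 by simp
  have e2b: "e2 \<in> inc_edges E b" unfolding inc_edges_def e2_def using e2 by simp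
  have e1a: "e1 \<notin> inc_edges E a" "e1 \<notin> inc_edges E b" unfolding inc_edges_def e1_def using d by auto
  have L0: "Lf E e0 = var e1 - Sa \<or> Lf E e0 = - (var e1 - Sa)"
  proof -
    have "(\<Sum>f\<in>inc_edges E u. var f) - (\<Sum>f\<in>inc_edges E a. var f) = var e1 - Sa"
      unfolding inc_split[OF fin e0a] Sa_def using ne unfolding iu e0_def e1_def e2_def by simp
    then show ?thesis using Lf_pair[of u a E] d unfolding e0_def by auto
  qed
  have L1: "Lf E e1 = var e0 - var e2 \<or> Lf E e1 = - (var e0 - var e2)"
    using Lf_pair[OF d(1), of E] unfolding e0_def e1_def e2_def iu iv using ne[unfolded e0_def e1_def e2_def]
    by (auto simp: algebra_simps)
  have L2: "Lf E e2 = var e1 - Sb \<or> Lf E e2 = - (var e1 - Sb)"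
  proof -
    have "(\<Sum>f\<in>inc_edges E v. var f) - (\<Sum>f\<in>inc_edges E b. var f) = var e1 - Sb"
      unfolding inc_split[OF fin e2b] Sb_def using ne unfolding iv e0_def e1_def e2_def by simp
    then show ?thesis using Lf_pair[of v b E] d unfolding e2_def by auto
  qed
  define Y where "Y = (var e1 - Sa) * ((var e1 - Sb) * B)"
  have PE2: "P_graph E = (var e0 - var e2) * Y \<or> P_graph E = - ((var e0 - var e2) * Y)"
  proof -
    have "P_graph E = (var e1 - Sa) * ((var e0 - var e2) * ((var e1 - Sb) * B))
       \<or> P_graph E = - ((var e1 - Sa) * ((var e0 - var e2) * ((var e1 - Sb) * B)))"
      unfolding PE by (rule pm_mult[OF L0 pm_mult[OF L1 pm_mult[OF L2 disjI1[OF refl]]]])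
    moreover have "(var e1 - Sa) * ((var e0 - var e2) * ((var e1 - Sb) * B)) = (var e0 - var e2) * Y"
      unfolding Y_def by (simp add: algebra_simps)
    ultimately show ?thesis by simp
  qed
  have notin: "u \<notin> e \<and> v \<notin> e" if "e \<in> E'" for e
  proof -
    have "e \<notin> inc_edges E u" "e \<notin> inc_edges E v"
      using that iu iv unfolding E'_def e0_def e1_def e2_def by auto
    then show ?thesis using that unfolding E'_def inc_edges_def by auto
  qed
  define S where "S = {e0} \<union> {e2}"
  have H: "\<forall>e\<in>E'. inc_edges E (Min e) - S = inc_edges E' (Min e) \<and> inc_edges E (Max e) - S = inc_edges E' (Max e)"
  proof (rule H_from[OF gr])
    show "E' \<subseteq> E" unfolding E'_def by auto
  next
    fix e t assume "e \<in> E'" "t \<in> e"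
    then have "t \<noteq> u" "t \<noteq> v" using notin by auto
    then show "inc_edges E t - S = inc_edges E' t" unfolding inc_edges_def E'_def e1_def S_def by auto
  qed
  define SaS where "SaS = (\<Sum>f\<in>inc_edges E a - {e0} - S. var f)"
  define SbS where "SbS = (\<Sum>f\<in>inc_edges E b - {e2} - S. var f)"
  have e1S: "e1 \<notin> S" unfolding S_def using ne by auto
  have ZY: "Zs S Y = (var e1 - SaS) * ((var e1 - SbS) * P_graph E')"
    unfolding Y_def Zs_mult Zs_diff Zs_var Sa_def Sb_def SaS_def SbS_def using ne e1S
    by (simp add: Zs_sumvar finite_inc[OF fin] Zprod[OF fin H fE', folded B_def] S_def[symmetric])
  have fa: "Zs {e1} SaS = SaS" "Zs {e1} SbS = SbS" unfolding SaS_def SbS_def using e1a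
    by (simp_all add: Zs_sumvar finite_inc[OF fin])
  have fp: "Zs {e1} (P_graph E') = P_graph E'"
  proof -
    have "e1 \<notin> E'" unfolding E'_def by simp
    then show ?thesis using Zfree[OF fE'] by simp
  qed
  define m1 where "m1 = sg e1 + m'"
  define m2 where "m2 = sg e1 + m1"
  have k1: "keys m1 \<inter> {e1} \<noteq> {}" "keys m2 \<inter> {e1} \<noteq> {}" unfolding m2_def m1_def keys_single_add by auto
  have k0: "keys m2 \<inter> {e0} = {}" unfolding m2_def m1_def keys_single_add using ne km unfolding E'_def e0_def e1_def e2_def by auto
  have k02: "keys (sg e0 + m2) \<inter> {e2} = {}" unfolding m2_def m1_def keys_single_add using ne km unfolding E'_def e0_def e1_def e2_def by auto
  have V: "lookup ((var e0 - var e2) * Y) (sg e0 + m2) = lookup (P_graph E') m'"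
  proof -
    have "lookup ((var e0 - var e2) * Y) (sg e0 + m2) = lookup (Zs {e2} ((var e0 - var e2) * Y)) (sg e0 + m2)"
      by (rule lookup_Zs_eq[OF k02])
    also have "Zs {e2} ((var e0 - var e2) * Y) = var e0 * Zs {e2} Y" using ne by (simp add: Zs_mult Zs_diff Zs_var)
    also have "lookup (var e0 * Zs {e2} Y) (sg e0 + m2) = lookup (Zs {e2} Y) m2" by (rule lookup_var_mult)
    also have "\<dots> = lookup (Zs {e0} (Zs {e2} Y)) m2" by (rule lookup_Zs_eq[OF k0])
    also have "Zs {e0} (Zs {e2} Y) = Zs S Y" unfolding S_def Zs_Zs ..
    also have "Zs S Y = var e1 * (var e1 * P_graph E') - var e1 * ((SaS + SbS) * P_graph E') + SaS * (SbS * P_graph E')"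
      unfolding ZY by (simp add: algebra_simps)
    also have "lookup (var e1 * (var e1 * P_graph E') - var e1 * ((SaS + SbS) * P_graph E') + SaS * (SbS * P_graph E')) m2
       = lookup (var e1 * (var e1 * P_graph E')) m2 - lookup (var e1 * ((SaS + SbS) * P_graph E')) m2 + lookup (SaS * (SbS * P_graph E')) m2"
      by (simp add: lookup_add lookup_minus)
    also have "lookup (var e1 * (var e1 * P_graph E')) m2 = lookup (P_graph E') m'"
      unfolding m2_def m1_def lookup_var_mult ..
    also have "lookup (var e1 * ((SaS + SbS) * P_graph E')) m2 = 0"
    proof -
      have "Zs {e1} ((SaS + SbS) * P_graph E') = (SaS + SbS) * P_graph E'" using fa fp by (simp add: Zs_mult Zs_add)
      then show ?thesis unfolding m2_def lookup_var_mult using Zs_free_zero k1(1) by blast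
    qed
    also have "lookup (SaS * (SbS * P_graph E')) m2 = 0"
    proof -
      have "Zs {e1} (SaS * (SbS * P_graph E')) = SaS * (SbS * P_graph E')" using fa fp by (simp add: Zs_mult)
      then show ?thesis using Zs_free_zero k1(2) by blast
    qed
    finally show ?thesis by simp
  qed
  show ?thesis using PE2 V unfolding m1_def m2_def E'_def e0_def e1_def e2_def by (auto simp: lookup_minus)
qed


lemma confC4:
  assumes fin: "finite E" and gr: "\<forall>e\<in>E. card e = 2"
    and d: "u \<noteq> v" "a \<noteq> u" "a \<noteq> v" "b \<noteq> u" "b \<noteq> v" "a \<noteq> b"
    and e0: "{u,a} \<in> E" and e1: "{u,v} \<in> E" and e2: "{v,b} \<in> E" and e3: "{a,b} \<in> E"
    and iu: "inc_edges E u = {{u,a},{u,v}}" and iv: "inc_edges E v = {{u,v},{v,b}}"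
    and ia: "inc_edges E a = {{u,a},{a,b}}" and ib: "inc_edges E b = {{v,b},{a,b}}"
    and km: "keys m' \<subseteq> E - {{u,a},{u,v},{v,b},{a,b}}"
  shows "lookup (P_graph E) (sg {u,a} + (sg {u,a} + (sg {u,v} + (sg {u,v} + m')))) = lookup (P_graph (E - {{u,a},{u,v},{v,b},{a,b}})) m'
       \<or> lookup (P_graph E) (sg {u,a} + (sg {u,a} + (sg {u,v} + (sg {u,v} + m')))) = - lookup (P_graph (E - {{u,a},{u,v},{v,b},{a,b}})) m'"
proof -
  define e0 e1 e2 e3 where "e0 = {u,a}" and "e1 = {u,v}" and "e2 = {v,b}" and "e3 = {a,b}"
  define E' where "E' = E - {e0, e1, e2, e3}"
  define B where "B = (\<Prod>e\<in>E'. Lf E e)"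
  have ne: "e0 \<noteq> e1" "e0 \<noteq> e2" "e0 \<noteq> e3" "e1 \<noteq> e2" "e1 \<noteq> e3" "e2 \<noteq> e3"
    unfolding e0_def e1_def e2_def e3_def using d by (auto simp: doubleton_eq_iff)
  have fE': "finite E'" unfolding E'_def using fin by simp
  have PE: "P_graph E = Lf E e0 * (Lf E e1 * (Lf E e2 * (Lf E e3 * B)))"
  proof -
    have "E = insert e0 (insert e1 (insert e2 (insert e3 E')))" unfolding E'_def using e0 e1 e2 e3 e0_def e1_def e2_def e3_def by auto
    moreover have "e0 \<notin> insert e1 (insert e2 (insert e3 E'))" "e1 \<notin> insert e2 (insert e3 E')" "e2 \<notin> insert e3 E'" "e3 \<notin> E'"
      unfolding E'_def using ne by auto
    ultimately show ?thesis unfolding P_Lf B_def using fE' by simp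
  qed
  note ne' = ne[unfolded e0_def e1_def e2_def e3_def]
  have L0: "Lf E e0 = var e1 - var e3 \<or> Lf E e0 = - (var e1 - var e3)"
    unfolding e0_def by (rule Lf_pair') (use d ne' in \<open>simp_all add: iu ia e0_def e1_def e2_def e3_def\<close>)
  have L1: "Lf E e1 = var e0 - var e2 \<or> Lf E e1 = - (var e0 - var e2)"
    unfolding e1_def by (rule Lf_pair') (use d ne' in \<open>simp_all add: iu iv e0_def e1_def e2_def e3_def\<close>)
  have L2: "Lf E e2 = var e1 - var e3 \<or> Lf E e2 = - (var e1 - var e3)"
    unfolding e2_def by (rule Lf_pair') (use d ne' in \<open>simp_all add: iv ib e0_def e1_def e2_def e3_def\<close>)
  have L3: "Lf E e3 = var e0 - var e2 \<or> Lf E e3 = - (var e0 - var e2)"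
    unfolding e3_def by (rule Lf_pair') (use d ne' in \<open>simp_all add: ia ib e0_def e1_def e2_def e3_def\<close>)
  define Q where "Q = (var e1 - var e3) * ((var e0 - var e2) * ((var e1 - var e3) * ((var e0 - var e2) * B)))"
  have PE2: "P_graph E = Q \<or> P_graph E = - Q"
    unfolding PE Q_def by (rule pm_mult[OF L0 pm_mult[OF L1 pm_mult[OF L2 pm_mult[OF L3 disjI1[OF refl]]]]])
  have notin: "u \<notin> e \<and> v \<notin> e \<and> a \<notin> e \<and> b \<notin> e" if "e \<in> E'" for e
  proof -
    have "e \<notin> inc_edges E u" "e \<notin> inc_edges E v" "e \<notin> inc_edges E a" "e \<notin> inc_edges E b"
      using that iu iv ia ib unfolding E'_def e0_def e1_def e2_def e3_def by auto
    then show ?thesis using that unfolding E'_def inc_edges_def by auto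
  qed
  define S where "S = {e2, e3}"
  have H: "\<forall>e\<in>E'. inc_edges E (Min e) - S = inc_edges E' (Min e) \<and> inc_edges E (Max e) - S = inc_edges E' (Max e)"
  proof (rule H_from[OF gr])
    show "E' \<subseteq> E" unfolding E'_def by auto
  next
    fix e t assume "e \<in> E'" "t \<in> e"
    then have "t \<noteq> u" "t \<noteq> v" "t \<noteq> a" "t \<noteq> b" using notin by auto
    then show "inc_edges E t - S = inc_edges E' t" unfolding inc_edges_def E'_def e0_def e1_def e2_def e3_def S_def by auto
  qed
  have ZQ: "Zs S Q = var e0 * (var e0 * (var e1 * (var e1 * P_graph E')))"
  proof -
    have "e0 \<notin> S" "e1 \<notin> S" "e2 \<in> S" "e3 \<in> S" unfolding S_def using ne by auto
    then have "Zs S Q = var e1 * (var e0 * (var e1 * (var e0 * P_graph E')))"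
      unfolding Q_def by (simp add: Zs_mult Zs_diff Zs_var Zprod[OF fin H fE', folded B_def])
    then show ?thesis by (simp add: algebra_simps)
  qed
  define M where "M = sg e0 + (sg e0 + (sg e1 + (sg e1 + m')))"
  have km': "keys m' \<inter> S = {}" using km unfolding S_def e0_def e1_def e2_def e3_def by blast
  have kM: "keys M \<inter> S = {}" unfolding M_def keys_single_add using ne km' unfolding S_def by auto
  have V: "lookup Q M = lookup (P_graph E') m'"
  proof -
    have "lookup Q M = lookup (Zs S Q) M" by (rule lookup_Zs_eq[OF kM])
    also have "\<dots> = lookup (P_graph E') m'" unfolding ZQ M_def lookup_var_mult ..
    finally show ?thesis .
  qed
  show ?thesis using PE2 V unfolding M_def E'_def e0_def e1_def e2_def e3_def by (auto simp: lookup_minus)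
qed

lemma confPaw:
  assumes fin: "finite E" and gr: "\<forall>e\<in>E. card e = 2"
    and d: "u \<noteq> v" "a \<noteq> u" "a \<noteq> v" "y \<noteq> u" "y \<noteq> v" "a \<noteq> y"
    and e0: "{u,a} \<in> E" and e1: "{u,v} \<in> E" and e2: "{v,a} \<in> E" and e3: "{a,y} \<in> E"
    and iu: "inc_edges E u = {{u,a},{u,v}}" and iv: "inc_edges E v = {{u,v},{v,a}}"
    and ia: "inc_edges E a = {{u,a},{v,a},{a,y}}" and iy: "inc_edges E y = {{a,y}}"
    and km: "keys m' \<subseteq> E - {{u,a},{u,v},{v,a},{a,y}}"
  shows "lookup (P_graph E) (sg {u,a} + (sg {u,a} + (sg {u,v} + (sg {u,v} + m')))) = lookup (P_graph (E - {{u,a},{u,v},{v,a},{a,y}})) m'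
       \<or> lookup (P_graph E) (sg {u,a} + (sg {u,a} + (sg {u,v} + (sg {u,v} + m')))) = - lookup (P_graph (E - {{u,a},{u,v},{v,a},{a,y}})) m'"
proof -
  define e0 e1 e2 e3 where "e0 = {u,a}" and "e1 = {u,v}" and "e2 = {v,a}" and "e3 = {a,y}"
  define E' where "E' = E - {e0, e1, e2, e3}"
  define B where "B = (\<Prod>e\<in>E'. Lf E e)"
  have ne: "e0 \<noteq> e1" "e0 \<noteq> e2" "e0 \<noteq> e3" "e1 \<noteq> e2" "e1 \<noteq> e3" "e2 \<noteq> e3"
    unfolding e0_def e1_def e2_def e3_def using d by (auto simp: doubleton_eq_iff)
  have fE': "finite E'" unfolding E'_def using fin by simp
  have PE: "P_graph E = Lf E e0 * (Lf E e1 * (Lf E e2 * (Lf E e3 * B)))"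
  proof -
    have "E = insert e0 (insert e1 (insert e2 (insert e3 E')))" unfolding E'_def using e0 e1 e2 e3 e0_def e1_def e2_def e3_def by auto
    moreover have "e0 \<notin> insert e1 (insert e2 (insert e3 E'))" "e1 \<notin> insert e2 (insert e3 E')" "e2 \<notin> insert e3 E'" "e3 \<notin> E'"
      unfolding E'_def using ne by auto
    ultimately show ?thesis unfolding P_Lf B_def using fE' by simp
  qed
  note ne' = ne[unfolded e0_def e1_def e2_def e3_def]
  define X0 where "X0 = (var e0 + var e1) - (var e0 + (var e2 + var e3))"
  define X1 where "X1 = var e0 - var e2"
  define X2 where "X2 = (var e1 + var e2) - (var e0 + (var e2 + var e3))"
  define X3 where "X3 = (var e0 + (var e2 + var e3)) - var e3"
  have L0: "Lf E e0 = X0 \<or> Lf E e0 = - X0"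
    unfolding e0_def by (rule Lf_pair') (use d ne' in \<open>simp_all add: iu ia X0_def e0_def e1_def e2_def e3_def\<close>)
  have L1: "Lf E e1 = X1 \<or> Lf E e1 = - X1"
    unfolding e1_def by (rule Lf_pair') (use d ne' in \<open>simp_all add: iu iv X1_def e0_def e1_def e2_def e3_def\<close>)
  have L2: "Lf E e2 = X2 \<or> Lf E e2 = - X2"
    unfolding e2_def by (rule Lf_pair') (use d ne' in \<open>simp_all add: iv ia X2_def e0_def e1_def e2_def e3_def\<close>)
  have L3: "Lf E e3 = X3 \<or> Lf E e3 = - X3"
    unfolding e3_def by (rule Lf_pair') (use d ne' in \<open>simp_all add: ia iy X3_def e0_def e1_def e2_def e3_def\<close>)
  define Q where "Q = X0 * (X1 * (X2 * (X3 * B)))"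
  have PE2: "P_graph E = Q \<or> P_graph E = - Q"
    unfolding PE Q_def by (rule pm_mult[OF L0 pm_mult[OF L1 pm_mult[OF L2 pm_mult[OF L3 disjI1[OF refl]]]]])
  have notin: "u \<notin> e \<and> v \<notin> e \<and> a \<notin> e \<and> y \<notin> e" if "e \<in> E'" for e
  proof -
    have "e \<notin> inc_edges E u" "e \<notin> inc_edges E v" "e \<notin> inc_edges E a" "e \<notin> inc_edges E y"
      using that iu iv ia iy unfolding E'_def e0_def e1_def e2_def e3_def by auto
    then show ?thesis using that unfolding E'_def inc_edges_def by auto
  qed
  define S where "S = {e2, e3}"
  have H: "\<forall>e\<in>E'. inc_edges E (Min e) - S = inc_edges E' (Min e) \<and> inc_edges E (Max e) - S = inc_edges E' (Max e)"
  proof (rule H_from[OF gr])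
    show "E' \<subseteq> E" unfolding E'_def by auto
  next
    fix e t assume "e \<in> E'" "t \<in> e"
    then have "t \<noteq> u" "t \<noteq> v" "t \<noteq> a" "t \<noteq> y" using notin by auto
    then show "inc_edges E t - S = inc_edges E' t" unfolding inc_edges_def E'_def e0_def e1_def e2_def e3_def S_def by auto
  qed
  have ZQ: "Zs S Q = var e0 * (var e0 * (var e1 * (var e1 * P_graph E'))) - var e0 * (var e0 * (var e0 * (var e1 * P_graph E')))"
  proof -
    have "e0 \<notin> S" "e1 \<notin> S" "e2 \<in> S" "e3 \<in> S" unfolding S_def using ne by auto
    then have "Zs S Q = var e1 * (var e0 * ((var e1 - var e0) * (var e0 * P_graph E')))"
      unfolding Q_def X0_def X1_def X2_def X3_def by (simp add: Zs_mult Zs_diff Zs_add Zs_minus Zs_var Zprod[OF fin H fE', folded B_def])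
    then show ?thesis by (simp add: algebra_simps)
  qed
  define m2 where "m2 = sg e1 + (sg e1 + m')"
  define M where "M = sg e0 + (sg e0 + m2)"
  have km': "keys m' \<inter> S = {}" "e0 \<notin> keys m'" using km unfolding S_def e0_def e1_def e2_def e3_def by blast+
  have kM: "keys M \<inter> S = {}" unfolding M_def m2_def keys_single_add using ne km' unfolding S_def by auto
  have k0: "keys m2 \<inter> {e0} \<noteq> {} \<Longrightarrow> False" unfolding m2_def keys_single_add using ne km' by auto
  have z: "lookup (var e0 * (var e1 * P_graph E')) m2 = 0"
  proof -
    have "lookup (var e0 * (var e1 * P_graph E')) m2 = lookup (Zs {e0} (var e0 * (var e1 * P_graph E'))) m2"
      using k0 by (intro lookup_Zs_eq) blast
    also have "Zs {e0} (var e0 * (var e1 * P_graph E')) = 0" by (simp add: Zs_mult Zs_var)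
    finally show ?thesis by simp
  qed
  have V: "lookup Q M = lookup (P_graph E') m'"
  proof -
    have "lookup Q M = lookup (Zs S Q) M" by (rule lookup_Zs_eq[OF kM])
    also have "\<dots> = lookup (var e0 * (var e0 * (var e1 * (var e1 * P_graph E')))) M
        - lookup (var e0 * (var e0 * (var e0 * (var e1 * P_graph E')))) M" unfolding ZQ lookup_minus ..
    also have "lookup (var e0 * (var e0 * (var e1 * (var e1 * P_graph E')))) M = lookup (P_graph E') m'"
      unfolding M_def m2_def lookup_var_mult ..
    also have "lookup (var e0 * (var e0 * (var e0 * (var e1 * P_graph E')))) M = 0"
      unfolding M_def lookup_var_mult by (rule z)
    finally show ?thesis by simp
  qed
  show ?thesis using PE2 V unfolding M_def m2_def E'_def e0_def e1_def e2_def e3_def by (auto simp: lookup_minus)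
qed




lemma inc1: "deg E u = 1 \<Longrightarrow> e \<in> E \<Longrightarrow> u \<in> e \<Longrightarrow> inc_edges E u = {e}"
proof -
  assume a: "deg E u = 1" "e \<in> E" "u \<in> e"
  then obtain x where "inc_edges E u = {x}" unfolding deg_def by (auto simp: card_1_singleton_iff)
  moreover have "e \<in> inc_edges E u" using a unfolding inc_edges_def by simp
  ultimately show ?thesis by simp
qed

lemma inc2: "deg E v = 2 \<Longrightarrow> e \<in> E \<Longrightarrow> v \<in> e \<Longrightarrow> \<exists>f. f \<noteq> e \<and> f \<in> E \<and> v \<in> f \<and> inc_edges E v = {e, f}"
proof -
  assume a: "deg E v = 2" "e \<in> E" "v \<in> e"
  then obtain x y where xy: "inc_edges E v = {x, y}" "x \<noteq> y" unfolding deg_def by (auto simp: card_2_iff)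
  moreover have ei: "e \<in> inc_edges E v" using a unfolding inc_edges_def by simp
  ultimately have "e = x \<or> e = y" by auto
  then obtain f where f: "f \<noteq> e" "inc_edges E v = {e, f}" using xy by auto
  then have "f \<in> inc_edges E v" by simp
  then show ?thesis using f unfolding inc_edges_def by auto
qed

lemma edge_other: "card e = 2 \<Longrightarrow> v \<in> e \<Longrightarrow> \<exists>w. w \<noteq> v \<and> e = {v, w}"
  by (auto simp: card_2_iff)

lemma card2_ne: "card {u, v} = 2 \<Longrightarrow> u \<noteq> v"
  by auto

lemma nice_comp:
  assumes nc: "nice E" and E2: "E2 = {e\<in>E. e \<inter> R = {}}" and cl: "\<forall>e\<in>E. e \<inter> R \<noteq> {} \<longrightarrow> e \<subseteq> R"
  shows "nice E2"
  unfolding nice_def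
proof
  assume "\<exists>i j. {i, j} \<in> E2 \<and> i \<noteq> j \<and> deg E2 i = 1 \<and> deg E2 j = 1"
  then obtain i j where ij: "{i, j} \<in> E2" "i \<noteq> j" "deg E2 i = 1" "deg E2 j = 1" by blast
  have nR: "i \<notin> R" "j \<notin> R" using ij(1) E2 by auto
  have "inc_edges E2 t = inc_edges E t" if "t \<notin> R" for t
    using that cl unfolding E2 inc_edges_def by blast
  then have "deg E i = 1" "deg E j = 1" using ij nR unfolding deg_def by auto
  moreover have "{i, j} \<in> E" using ij(1) E2 by auto
  ultimately show False using nc ij(2) unfolding nice_def by blast
qed

lemma reduce:
  assumes gr: "graph n E"
    and minh: "\<And>m E'. m < n \<Longrightarrow> graph m E' \<Longrightarrow> nice E' \<Longrightarrow> alg_1b_choosable E' 5"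
    and R: "R \<subseteq> {1..n}" "R \<noteq> {}" and E2: "E2 = {e\<in>E. e \<inter> R = {}}" and nc: "nice E2"
    and keysD: "keys mD \<subseteq> E - E2" and sumD: "(\<Sum>e\<in>E-E2. lookup mD e) = card (E - E2)"
    and bnd: "\<forall>e. lookup mD e \<le> 4"
    and coef: "\<And>m'. keys m' \<subseteq> E2 \<Longrightarrow> lookup (P_graph E) (mD + m') = lookup (P_graph E2) m'
                 \<or> lookup (P_graph E) (mD + m') = - lookup (P_graph E2) m'"
  shows "alg_1b_choosable E 5"
proof (rule extend[OF finite_graph[OF gr] _ _ keysD sumD bnd coef])
  show "E2 \<subseteq> E" using E2 by auto
  show "alg_1b_choosable E2 5" by (rule sub_choosable[OF gr minh R E2 nc])
qed

lemma lookup_sg: "lookup (sg e) f = (if f = e then 1 else 0)"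
  by (simp add: lookup_single)


lemma Erem: "E1 = {e\<in>E. e \<inter> R = {}} \<Longrightarrow> (\<Union>t\<in>R. inc_edges E t) = D \<Longrightarrow> E1 = E - D"
  unfolding inc_edges_def by blast

lemma Ecl: "(\<Union>t\<in>R. inc_edges E t) = D \<Longrightarrow> \<forall>e\<in>D. e \<subseteq> R \<Longrightarrow> \<forall>e\<in>E. e \<inter> R \<noteq> {} \<longrightarrow> e \<subseteq> R"
  unfolding inc_edges_def by blast

lemma graph_facts: "graph n E \<Longrightarrow> finite E \<and> (\<forall>e\<in>E. card e = 2) \<and> (\<forall>e\<in>E. e \<subseteq> {1..n})"
  using finite_graph unfolding graph_def by blast

lemma part1:
  assumes gr: "graph n E" and nc: "nice E" and nch: "\<not> alg_1b_choosable E 5"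
    and minh: "\<And>m E'. m < n \<Longrightarrow> graph m E' \<Longrightarrow> nice E' \<Longrightarrow> alg_1b_choosable E' 5"
    and uv: "{u,v} \<in> E" and du: "deg E u = 1" and dv: "deg E v = 2"
  shows False
proof -
  have fin: "finite E" and cE: "\<forall>e\<in>E. card e = 2" and sE: "\<forall>e\<in>E. e \<subseteq> {1..n}"
    using graph_facts[OF gr] by auto
  have uvne: "u \<noteq> v" using cE uv by (metis card2_ne)
  define e1 where "e1 = {u,v}"
  have iu: "inc_edges E u = {e1}" unfolding e1_def by (rule inc1[OF du uv]) simp
  obtain e2 where e2: "e2 \<noteq> e1" "e2 \<in> E" "v \<in> e2" "inc_edges E v = {e1, e2}"
    using inc2[OF dv uv] unfolding e1_def by auto
  obtain w where w: "w \<noteq> v" "e2 = {v, w}" using edge_other[of e2 v] cE e2 by auto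
  have wu: "w \<noteq> u" using e2(1) w unfolding e1_def by (auto simp: insert_commute)
  define R where "R = {u, v}"
  define E1 where "E1 = {e\<in>E. e \<inter> R = {}}"
  have U1: "(\<Union>t\<in>R. inc_edges E t) = {e1, e2}" unfolding R_def using iu e2(4) by auto
  have E1eq: "E1 = E - {e1, e2}" by (rule Erem[OF E1_def U1])
  have Rsub: "R \<subseteq> {1..n}" unfolding R_def using sE uv by auto
  show False
  proof (cases "nice E1")
    case True
    define mD where "mD = sg e2 + sg e1"
    have DD: "E - E1 = {e1, e2}" unfolding E1eq using e2 uv e1_def by auto
    have "alg_1b_choosable E 5"
    proof (rule reduce[OF gr minh Rsub _ E1_def True])
      show "R \<noteq> {}" unfolding R_def by simp
      show "keys mD \<subseteq> E - E1" unfolding DD mD_def keys_add_nat by simp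
      show "(\<Sum>e\<in>E - E1. lookup mD e) = card (E - E1)" unfolding DD mD_def using e2(1)
        by (simp add: lookup_add lookup_single when_def)
      show "\<forall>e. lookup mD e \<le> 4" unfolding mD_def by (simp add: lookup_add lookup_single when_def)
      fix m' :: "nat set \<Rightarrow>\<^sub>0 nat" assume km: "keys m' \<subseteq> E1"
      have "mD + m' = sg {v,w} + (sg {u,v} + m')" unfolding mD_def w e1_def by (simp add: add.assoc)
      then show "lookup (P_graph E) (mD + m') = lookup (P_graph E1) m' \<or> lookup (P_graph E) (mD + m') = - lookup (P_graph E1) m'"
        using conf1[OF fin cE uvne w(1)[symmetric] wu[symmetric] uv e2(2)[unfolded w] iu[unfolded e1_def] e2(4)[unfolded e1_def w]]
          km unfolding E1eq e1_def w by simp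
    qed
    then show False using nch by simp
  next
    case False
    then obtain x y where xy: "{x,y} \<in> E1" "x \<noteq> y" "deg E1 x = 1" "deg E1 y = 1" unfolding nice_def by blast
    have incE1: "inc_edges E1 t = inc_edges E t - {e1, e2}" for t unfolding E1eq inc_edges_def by auto
    have same: "deg E1 t = deg E t" if "t \<noteq> u" "t \<noteq> v" "t \<noteq> w" for t
    proof -
      have "inc_edges E1 t = inc_edges E t" unfolding incE1 using that unfolding inc_edges_def e1_def w by auto
      then show ?thesis unfolding deg_def by simp
    qed
    have xyR: "x \<notin> R" "y \<notin> R" using xy(1) unfolding E1_def by auto
    obtain z where wz: "{w,z} \<in> E1" "z \<noteq> w" "deg E1 w = 1" "deg E1 z = 1"
    proof (cases "x = w \<or> y = w")
      case True
      then show ?thesis using xy that by (auto simp: insert_commute)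
    next
      case False
      then have "deg E x = 1" "deg E y = 1" using same xyR xy unfolding R_def by auto
      moreover have "{x,y} \<in> E" using xy(1) unfolding E1_def by simp
      ultimately show ?thesis using nc xy(2) unfolding nice_def by blast
    qed
    have zR: "z \<noteq> u" "z \<noteq> v" using wz(1) unfolding E1_def R_def by auto
    have dz: "deg E z = 1" using same[OF zR wz(2)] wz(4) by simp
    define e3 where "e3 = {w, z}"
    have e3E: "e3 \<in> E" using wz(1) unfolding E1_def e3_def by simp
    have iw1: "inc_edges E1 w = {e3}" unfolding e3_def by (rule inc1[OF wz(3) wz(1)]) simp
    have e2w: "e2 \<in> inc_edges E w" unfolding inc_edges_def w using e2(2) w by simp
    have e1w: "e1 \<notin> inc_edges E w" unfolding inc_edges_def e1_def using w wu by auto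
    have iw: "inc_edges E w = {e2, e3}"
    proof -
      have "inc_edges E w - {e2} = inc_edges E1 w" unfolding incE1 using e1w by auto
      then have "inc_edges E w - {e2} = {e3}" using iw1 by simp
      then show ?thesis using e2w by blast
    qed
    have iz: "inc_edges E z = {e3}" unfolding e3_def by (rule inc1[OF dz e3E[unfolded e3_def]]) simp
    define R2 where "R2 = {u, v, w, z}"
    define E2 where "E2 = {e\<in>E. e \<inter> R2 = {}}"
    have U2: "(\<Union>t\<in>R2. inc_edges E t) = {e1, e2, e3}" unfolding R2_def using iu e2(4) iw iz by auto
    have E2eq: "E2 = E - {e1, e2, e3}" by (rule Erem[OF E2_def U2])
    have cl: "\<forall>e\<in>E. e \<inter> R2 \<noteq> {} \<longrightarrow> e \<subseteq> R2"
      by (rule Ecl[OF U2]) (auto simp: R2_def e1_def w e3_def)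
    have nc2: "nice E2" by (rule nice_comp[OF nc E2_def cl])
    have R2sub: "R2 \<subseteq> {1..n}" unfolding R2_def using sE uv e3E e2(2) w unfolding e3_def by auto
    define mD where "mD = sg e2 + sg e2 + sg e1"
    have ne: "e1 \<noteq> e2" "e1 \<noteq> e3" "e2 \<noteq> e3" unfolding e1_def e3_def w using zR wz(2) wu w uvne
      by (auto simp: doubleton_eq_iff)
    have DD: "E - E2 = {e1, e2, e3}" unfolding E2eq using e2 uv e1_def e3E by auto
    have "alg_1b_choosable E 5"
    proof (rule reduce[OF gr minh R2sub _ E2_def nc2])
      show "R2 \<noteq> {}" unfolding R2_def by simp
      show "keys mD \<subseteq> E - E2" unfolding DD mD_def keys_add_nat by simp
      show "(\<Sum>e\<in>E - E2. lookup mD e) = card (E - E2)" unfolding DD mD_def using ne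
        by (simp add: lookup_add lookup_single when_def)
      show "\<forall>e. lookup mD e \<le> 4" unfolding mD_def by (simp add: lookup_add lookup_single when_def)
      fix m' :: "nat set \<Rightarrow>\<^sub>0 nat" assume km: "keys m' \<subseteq> E2"
      have "mD + m' = sg {v,w} + (sg {v,w} + (sg {u,v} + m'))" unfolding mD_def w e1_def by (simp add: add.assoc)
      then show "lookup (P_graph E) (mD + m') = lookup (P_graph E2) m' \<or> lookup (P_graph E) (mD + m') = - lookup (P_graph E2) m'"
        using confP4[OF fin cE uvne w(1)[symmetric] wu[symmetric] zR(1) zR(2) wz(2)
            uv e2(2)[unfolded w] e3E[unfolded e3_def] iu[unfolded e1_def] e2(4)[unfolded e1_def w]
            iw[unfolded w e3_def] iz[unfolded e3_def]]
          km unfolding E2eq e1_def w e3_def by simp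
    qed
    then show False using nch by simp
  qed
qed


lemma side:
  assumes gr: "graph n E" and nc: "nice E" and nch: "\<not> alg_1b_choosable E 5"
    and minh: "\<And>m E'. m < n \<Longrightarrow> graph m E' \<Longrightarrow> nice E' \<Longrightarrow> alg_1b_choosable E' 5"
    and p1: "\<And>x y. {x,y} \<in> E \<Longrightarrow> deg E x = 1 \<Longrightarrow> deg E y = 2 \<Longrightarrow> False"
    and d: "u \<noteq> v" "a \<noteq> u" "a \<noteq> v" "b \<noteq> u" "b \<noteq> v"
    and e0: "{u,a} \<in> E" and e1: "{u,v} \<in> E" and e2: "{v,b} \<in> E"
    and iu: "inc_edges E u = {{u,a},{u,v}}" and iv: "inc_edges E v = {{u,v},{v,b}}"
    and E1: "E1 = E - {{u,a},{u,v},{v,b}}"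
    and sa: "{a,s} \<in> E1" "s \<noteq> a" "deg E1 a = 1" "deg E1 s = 1"
  shows False
proof -
  have fin: "finite E" and cE: "\<forall>e\<in>E. card e = 2" and sE: "\<forall>e\<in>E. e \<subseteq> {1..n}"
    using graph_facts[OF gr] by auto
  define e0 e1 e2 e3 where "e0 = {u,a}" and "e1 = {u,v}" and "e2 = {v,b}" and "e3 = {a,s}"
  have incE1: "inc_edges E1 t = inc_edges E t - {e0, e1, e2}" for t
    unfolding E1 inc_edges_def e0_def e1_def e2_def by auto
  have same: "deg E1 t = deg E t" if "t \<noteq> u" "t \<noteq> v" "t \<noteq> a" "t \<noteq> b" for t
  proof -
    have "inc_edges E1 t = inc_edges E t" unfolding incE1 using that unfolding inc_edges_def e0_def e1_def e2_def by auto
    then show ?thesis unfolding deg_def by simp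
  qed
  have e3E: "e3 \<in> E" "e3 \<notin> {e0, e1, e2}" using sa(1) unfolding E1 e0_def e1_def e2_def e3_def by auto
  have su: "s \<noteq> u" "s \<noteq> v"
  proof -
    show "s \<noteq> u"
    proof
      assume "s = u"
      then have "e3 \<in> inc_edges E u" using e3E unfolding inc_edges_def e3_def by simp
      then show False using e3E iu unfolding e0_def e1_def by auto
    qed
    show "s \<noteq> v"
    proof
      assume "s = v"
      then have "e3 \<in> inc_edges E v" using e3E unfolding inc_edges_def e3_def by simp
      then show False using e3E iv unfolding e1_def e2_def by auto
    qed
  qed
  have ia1: "inc_edges E1 a = {e3}" unfolding e3_def by (rule inc1[OF sa(3) sa(1)]) simp
  have e0a: "e0 \<in> inc_edges E a" using e0 unfolding e0_def inc_edges_def by simp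
  have e1a: "e1 \<notin> inc_edges E a" using d unfolding e1_def inc_edges_def by auto
  have Rsub: "{u, v, a, s} \<subseteq> {1..n}" using sE e0 e1 e3E(1) unfolding e3_def by auto
  have fact4: "alg_1b_choosable E 5" if ia: "inc_edges E a = {e0, e4, e3}" and is': "inc_edges E s = {e4', e3}"
    and e4s: "e4 \<in> {e0,e1,e2,e3}" "e4' \<in> {e0,e1,e2,e3}"
    and cf: "\<And>m'. keys m' \<subseteq> E - {e0, e1, e2, e3} \<Longrightarrow>
       lookup (P_graph E) (sg e0 + (sg e0 + (sg e1 + (sg e1 + m')))) = lookup (P_graph (E - {e0, e1, e2, e3})) m'
       \<or> lookup (P_graph E) (sg e0 + (sg e0 + (sg e1 + (sg e1 + m')))) = - lookup (P_graph (E - {e0, e1, e2, e3})) m'"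
    and bv: "b \<in> {a, s}"
    for e4 e4'
  proof -
    define R2 where "R2 = {u, v, a, s}"
    define E2 where "E2 = {e\<in>E. e \<inter> R2 = {}}"
    have U2: "(\<Union>t\<in>R2. inc_edges E t) = {e0, e1, e2, e3}" unfolding R2_def using iu iv ia is' e4s
      unfolding e0_def e1_def e2_def by auto
    have E2eq: "E2 = E - {e0, e1, e2, e3}" by (rule Erem[OF E2_def U2])
    have cl: "\<forall>e\<in>E. e \<inter> R2 \<noteq> {} \<longrightarrow> e \<subseteq> R2"
      by (rule Ecl[OF U2]) (use bv in \<open>auto simp: R2_def e0_def e1_def e2_def e3_def\<close>)
    have nc2: "nice E2" by (rule nice_comp[OF nc E2_def cl])
    define mD where "mD = sg e0 + sg e0 + sg e1 + sg e1"
    have ne: "e0 \<noteq> e1" "e0 \<noteq> e2" "e0 \<noteq> e3" "e1 \<noteq> e2" "e1 \<noteq> e3" "e2 \<noteq> e3"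
      using e3E(2) d unfolding e0_def e1_def e2_def by (auto simp: doubleton_eq_iff)
    have DD: "E - E2 = {e0, e1, e2, e3}" unfolding E2eq using e0 e1 e2 e3E unfolding e0_def e1_def e2_def by auto
    show ?thesis
    proof (rule reduce[OF gr minh Rsub[folded R2_def] _ E2_def nc2])
      show "R2 \<noteq> {}" unfolding R2_def by simp
      show "keys mD \<subseteq> E - E2" unfolding DD mD_def keys_add_nat by simp
      show "(\<Sum>e\<in>E - E2. lookup mD e) = card (E - E2)" unfolding DD mD_def using ne
        by (simp add: lookup_add lookup_single when_def)
      show "\<forall>e. lookup mD e \<le> 4" unfolding mD_def by (simp add: lookup_add lookup_single when_def)
      fix m' :: "nat set \<Rightarrow>\<^sub>0 nat" assume km: "keys m' \<subseteq> E2"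
      have "mD + m' = sg e0 + (sg e0 + (sg e1 + (sg e1 + m')))" unfolding mD_def by (simp add: add.assoc)
      then show "lookup (P_graph E) (mD + m') = lookup (P_graph E2) m' \<or> lookup (P_graph E) (mD + m') = - lookup (P_graph E2) m'"
        using cf km unfolding E2eq by simp
    qed
  qed
  show False
  proof (cases "a = b")
    case True
    have e2a: "e2 \<in> inc_edges E a" using e2 True unfolding e2_def inc_edges_def by simp
    have ia: "inc_edges E a = {e0, e2, e3}"
    proof -
      have "inc_edges E a - {e0, e1, e2} = {e3}" using ia1 incE1 by simp
      then show ?thesis using e0a e1a e2a by blast
    qed
    have sb: "s \<noteq> b" using sa(2) True by simp
    have ds: "deg E s = 1" using same[OF su sa(2) sb] sa(4) by simp
    have is': "inc_edges E s = {e3}" unfolding e3_def by (rule inc1[OF ds e3E(1)[unfolded e3_def]]) simp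
    show False
    proof (rule notE[OF nch], rule fact4[OF ia])
      show "inc_edges E s = {e3, e3}" using is' by simp
      show "e2 \<in> {e0,e1,e2,e3}" "e3 \<in> {e0,e1,e2,e3}" by auto
      show "b \<in> {a, s}" using True by simp
      fix m' :: "nat set \<Rightarrow>\<^sub>0 nat" assume km: "keys m' \<subseteq> E - {e0, e1, e2, e3}"
      show "lookup (P_graph E) (sg e0 + (sg e0 + (sg e1 + (sg e1 + m')))) = lookup (P_graph (E - {e0, e1, e2, e3})) m'
       \<or> lookup (P_graph E) (sg e0 + (sg e0 + (sg e1 + (sg e1 + m')))) = - lookup (P_graph (E - {e0, e1, e2, e3})) m'"
        using confPaw[OF fin cE d(1) d(2) d(3) su sa(2)[symmetric] e0 e1 e2[folded True] e3E(1)[unfolded e3_def]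
          iu iv[folded True] ia[unfolded e0_def e2_def e3_def, folded True] is'[unfolded e3_def]]
          km unfolding e0_def e1_def e2_def e3_def True by simp
    qed
  next
    case False
    have e2a: "e2 \<notin> inc_edges E a" using False d unfolding e2_def inc_edges_def by auto
    have ia: "inc_edges E a = {e0, e3}"
    proof -
      have "inc_edges E a - {e0, e1, e2} = {e3}" using ia1 incE1 by simp
      then show ?thesis using e0a e1a e2a by blast
    qed
    have e03: "e0 \<noteq> e3" using su unfolding e0_def e3_def by (auto simp: doubleton_eq_iff)
    have da: "deg E a = 2" unfolding deg_def ia using e03 by simp
    show False
    proof (cases "s = b")
      case False
      have ds: "deg E s = 1" using same[OF su sa(2) False] sa(4) by simp
      show False using p1[of s a] ds da e3E(1) unfolding e3_def by (simp add: insert_commute)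
    next
      case True
      have ib1: "inc_edges E1 b = {e3}" unfolding e3_def True
        by (rule inc1[OF sa(4)[unfolded True] sa(1)[unfolded True]]) simp
      have e2b: "e2 \<in> inc_edges E b" using e2 unfolding e2_def inc_edges_def by simp
      have e01b: "e0 \<notin> inc_edges E b" "e1 \<notin> inc_edges E b" using d \<open>a \<noteq> b\<close> unfolding e0_def e1_def inc_edges_def by auto
      have ib: "inc_edges E b = {e2, e3}"
      proof -
        have "inc_edges E b - {e0, e1, e2} = {e3}" using ib1 incE1 by simp
        then show ?thesis using e2b e01b by blast
      qed
      show False
      proof (rule notE[OF nch], rule fact4[of e3 e2])
        show "inc_edges E a = {e0, e3, e3}" using ia by simp
        show "inc_edges E s = {e2, e3}" using ib True by simp
        show "e3 \<in> {e0,e1,e2,e3}" "e2 \<in> {e0,e1,e2,e3}" by auto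
        show "b \<in> {a, s}" using True by simp
        fix m' :: "nat set \<Rightarrow>\<^sub>0 nat" assume km: "keys m' \<subseteq> E - {e0, e1, e2, e3}"
        show "lookup (P_graph E) (sg e0 + (sg e0 + (sg e1 + (sg e1 + m')))) = lookup (P_graph (E - {e0, e1, e2, e3})) m'
         \<or> lookup (P_graph E) (sg e0 + (sg e0 + (sg e1 + (sg e1 + m')))) = - lookup (P_graph (E - {e0, e1, e2, e3})) m'"
          using confC4[OF fin cE d \<open>a \<noteq> b\<close> e0 e1 e2 e3E(1)[unfolded e3_def True]
            iu iv ia[unfolded e0_def e3_def True] ib[unfolded e2_def e3_def True]]
            km unfolding e0_def e1_def e2_def e3_def True by simp
      qed
    qed
  qed
qed


lemma part2:
  assumes gr: "graph n E" and nc: "nice E" and nch: "\<not> alg_1b_choosable E 5"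
    and minh: "\<And>m E'. m < n \<Longrightarrow> graph m E' \<Longrightarrow> nice E' \<Longrightarrow> alg_1b_choosable E' 5"
    and p1: "\<And>x y. {x,y} \<in> E \<Longrightarrow> deg E x = 1 \<Longrightarrow> deg E y = 2 \<Longrightarrow> False"
    and uv: "{u,v} \<in> E" and uvne: "u \<noteq> v" and du: "deg E u = 2" and dv: "deg E v = 2"
  shows False
proof -
  have fin: "finite E" and cE: "\<forall>e\<in>E. card e = 2" and sE: "\<forall>e\<in>E. e \<subseteq> {1..n}"
    using graph_facts[OF gr] by auto
  define e1 where "e1 = {u,v}"
  obtain e0 where e0: "e0 \<noteq> e1" "e0 \<in> E" "u \<in> e0" "inc_edges E u = {e1, e0}"
    using inc2[OF du uv] unfolding e1_def by auto
  obtain a where a: "a \<noteq> u" "e0 = {u, a}" using edge_other[of e0 u] cE e0 by auto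
  have av: "a \<noteq> v" using e0(1) a unfolding e1_def by auto
  have vu: "{v,u} \<in> E" using uv by (simp add: insert_commute)
  obtain e2 where e2: "e2 \<noteq> e1" "e2 \<in> E" "v \<in> e2" "inc_edges E v = {e1, e2}"
    using inc2[OF dv vu] unfolding e1_def by (auto simp: insert_commute)
  obtain b where b: "b \<noteq> v" "e2 = {v, b}" using edge_other[of e2 v] cE e2 by auto
  have bu: "b \<noteq> u" using e2(1) b unfolding e1_def by (auto simp: insert_commute)
  define R where "R = {u, v}"
  define E1 where "E1 = {e\<in>E. e \<inter> R = {}}"
  have U1: "(\<Union>t\<in>R. inc_edges E t) = {e0, e1, e2}" unfolding R_def using e0(4) e2(4) by auto
  have E1eq: "E1 = E - {e0, e1, e2}" by (rule Erem[OF E1_def U1])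
  have Rsub: "R \<subseteq> {1..n}" unfolding R_def using sE uv by auto
  have iu: "inc_edges E u = {{u,a},{u,v}}" using e0(4) a unfolding e1_def by auto
  have iv: "inc_edges E v = {{u,v},{v,b}}" using e2(4) b unfolding e1_def by auto
  show False
  proof (cases "nice E1")
    case True
    define mD where "mD = sg e0 + sg e1 + sg e1"
    have ne: "e0 \<noteq> e1" "e1 \<noteq> e2" "e0 \<noteq> e2" using e0(1) e2(1) a b uvne bu unfolding e1_def
      by (auto simp: doubleton_eq_iff)
    have DD: "E - E1 = {e0, e1, e2}" unfolding E1eq using e0 e2 uv e1_def by auto
    have "alg_1b_choosable E 5"
    proof (rule reduce[OF gr minh Rsub _ E1_def True])
      show "R \<noteq> {}" unfolding R_def by simp
      show "keys mD \<subseteq> E - E1" unfolding DD mD_def keys_add_nat by simp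
      show "(\<Sum>e\<in>E - E1. lookup mD e) = card (E - E1)" unfolding DD mD_def using ne
        by (simp add: lookup_add lookup_single when_def)
      show "\<forall>e. lookup mD e \<le> 4" unfolding mD_def by (simp add: lookup_add lookup_single when_def)
      fix m' :: "nat set \<Rightarrow>\<^sub>0 nat" assume km: "keys m' \<subseteq> E1"
      have "mD + m' = sg {u,a} + (sg {u,v} + (sg {u,v} + m'))" unfolding mD_def a e1_def by (simp add: add.assoc)
      then show "lookup (P_graph E) (mD + m') = lookup (P_graph E1) m' \<or> lookup (P_graph E) (mD + m') = - lookup (P_graph E1) m'"
        using conf2[OF fin cE uvne a(1) av bu b(1) e0(2)[unfolded a] uv e2(2)[unfolded b] iu iv]
          km unfolding E1eq e1_def a b by simp
    qed
    then show False using nch by simp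
  next
    case False
    then obtain x y where xy: "{x,y} \<in> E1" "x \<noteq> y" "deg E1 x = 1" "deg E1 y = 1" unfolding nice_def by blast
    have incE1: "inc_edges E1 t = inc_edges E t - {e0, e1, e2}" for t unfolding E1eq inc_edges_def by auto
    have same: "deg E1 t = deg E t" if "t \<noteq> u" "t \<noteq> v" "t \<noteq> a" "t \<noteq> b" for t
    proof -
      have "inc_edges E1 t = inc_edges E t" unfolding incE1 using that unfolding inc_edges_def e1_def a b by auto
      then show ?thesis unfolding deg_def by simp
    qed
    have xyR: "x \<notin> R" "y \<notin> R" using xy(1) unfolding E1_def by auto
    obtain t s where ts: "{t,s} \<in> E1" "s \<noteq> t" "deg E1 t = 1" "deg E1 s = 1" "t = a \<or> t = b"
    proof (cases "x = a \<or> x = b")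
      case True then show ?thesis using xy that by auto
    next
      case F1: False
      show ?thesis
      proof (cases "y = a \<or> y = b")
        case True then show ?thesis using xy that by (auto simp: insert_commute)
      next
        case False
        then have "deg E x = 1" "deg E y = 1" using same xyR xy F1 unfolding R_def by auto
        moreover have "{x,y} \<in> E" using xy(1) unfolding E1_def by simp
        ultimately show ?thesis using nc xy(2) unfolding nice_def by blast
      qed
    qed
    have E1': "E1 = E - {{u,a},{u,v},{v,b}}" unfolding E1eq e1_def a b ..
    show False
    proof (cases "t = a")
      case True
      show False
        by (rule side[OF gr nc nch minh p1 uvne a(1) av bu b(1) e0(2)[unfolded a] uv e2(2)[unfolded b] iu iv E1'
            ts(1)[unfolded True] ts(2)[unfolded True] ts(3)[unfolded True] ts(4)])
    next
      case False
      then have tb: "t = b" using ts(5) by simp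
      have E1'': "E1 = E - {{v,b},{v,u},{u,a}}" unfolding E1' by (auto simp: insert_commute)
      show False
        by (rule side[OF gr nc nch minh p1 uvne[symmetric] b(1) bu av a(1) e2(2)[unfolded b] vu e0(2)[unfolded a]
            _ _ E1'' ts(1)[unfolded tb] ts(2)[unfolded tb] ts(3)[unfolded tb] ts(4)])
          (use iu iv in \<open>auto simp: insert_commute\<close>)
    qed
  qed
qed

theorem lemma5p3:
  fixes n :: nat and E :: "nat set set"
  assumes "graph n E"
    and "nice E"
    and "\<not> alg_1b_choosable E 5"
    and "\<And>m E'. m < n \<Longrightarrow> graph m E' \<Longrightarrow> nice E' \<Longrightarrow> alg_1b_choosable E' 5"
  shows "\<not> (\<exists>u v. {u, v} \<in> E \<and> deg E u = 1 \<and> deg E v = 2) \<and>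
         \<not> (\<exists>u v. {u, v} \<in> E \<and> u \<noteq> v \<and> deg E u = 2 \<and> deg E v = 2)"
proof -
  have p1: "False" if h: "{x,y} \<in> E" "deg E x = 1" "deg E y = 2" for x y
    by (rule part1[OF assms(1) assms(2) assms(3) _ h]) (rule assms(4))
  moreover have "False" if h: "{x,y} \<in> E" "x \<noteq> y" "deg E x = 2" "deg E y = 2" for x y
    by (rule part2[OF assms(1) assms(2) assms(3) _ p1 h]) (rule assms(4))
  ultimately show ?thesis by blast
qed



end
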